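(* Let $A,B$ be real symmetric $4\times 4$ matrices defining quadrics $\mathcal A: X^TAX=0$, $\mathcal B: X^TBX=0$ in $\mathbb{PR}^3$ with $f(\lambda)=\det(\lambda A-B)$ not identically zero. If $f(\lambda)=0$ has one triple root and a simple root with Segre characteristic $[(21)1]$, then the only possible index sequences (up to equivalence) are $\langle 1\,{\wr\wr}_{-}|\,2\,|\,3\rangle$ and $\langle 1\,{\wr\wr}_{+}|\,2\,|\,3\rangle$ (the triple root carrying the string ${\wr\wr}_{\pm}|$). Furthermore: (1) when the index sequence is $\langle 1\,{\wr\wr}_{-}|\,2\,|\,3\rangle$, the QSIC comprises two real conics tangent to each other at one real point; (2) when the index sequence is $\langle 1\,{\wr\wr}_{+}|\,2\,|\,3\rangle$, the QSIC comprises two imaginary conics tangent to each other at one real point.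
   Context: $X=(x,y,z,w)^T$ homogeneous coordinates; QSIC $=\mathcal A\cap\mathcal B$. One may take $A$ nonsingular. Canonical form: for $A$ nonsingular there is a real invertible $Q$ with $Q^TAQ=\mathrm{diag}(\varepsilon_1E_1,\dots,\varepsilon_rE_r,E_{r+1},\dots,E_m)$, $Q^TBQ=\mathrm{diag}(\varepsilon_1E_1J_1,\dots,\varepsilon_rE_rJ_r,E_{r+1}J_{r+1},\dots,E_mJ_m)$, $J_1,\dots,J_r$ the real Jordan blocks of $A^{-1}B$ for real eigenvalues, $E_i$ anti-identity matrices, $\varepsilon_i\in\{\pm1\}$ uniquely determined (sign of $J_i$). Segre characteristic $[(21)1]$: one eigenvalue with a $2\times2$ and a $1\times1$ block, another with a $1\times1$ block. $\mathrm{Id}(\lambda)$ = number of positive eigenvalues of $\lambda A-B$. Index sequence $\langle s_0\sigma_1s_1\sigma_2s_2\rangle$: $s_j$ the values of $\mathrm{Id}$ on the intervals determined by the real roots; $\sigma_j$ lists the blocks of root $j$, larger first: $p$ copies of $\wr$ with subscript the block's sign for a $p\times p$ block, $p\ge2$, and $|$ for a $1\times1$ block. Equivalence: induced by change of basis of the pencil (rotation, reversal, complement $s_j\mapsto 4-s_j$ with sign reversal). A conic is real if it has infinitely many real points, imaginary otherwise. *)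

theory Defs
  imports "HOL-Analysis.Analysis" "HOL-Computational_Algebra.Polynomial"
begin

definition symmetric4 :: "real^4^4 \<Rightarrow> bool" where
  "symmetric4 M \<longleftrightarrow> transpose M = M"

definition pencil_poly :: "real^4^4 \<Rightarrow> real^4^4 \<Rightarrow> real poly" where
  "pencil_poly A B = det (\<chi> i j. [: - (B$i$j), A$i$j :])"

definition charpoly4 :: "real^4^4 \<Rightarrow> real poly" where
  "charpoly4 M = det (\<chi> i j. (if i = j then [:0, 1:] else 0) - [: M$i$j :])"

definition npos_eig :: "real^4^4 \<Rightarrow> nat" where
  "npos_eig M = (\<Sum>r\<in>{r. r > 0 \<and> poly (charpoly4 M) r = 0}. order r (charpoly4 M))"

definition Id_pencil :: "real^4^4 \<Rightarrow> real^4^4 \<Rightarrow> real \<Rightarrow> nat" where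
  "Id_pencil A B l = npos_eig (l *\<^sub>R A - B)"

definition jordan_21_1 :: "real \<Rightarrow> real \<Rightarrow> real^4^4" where
  "jordan_21_1 l1 l2 = vector [vector [l1, 1, 0, 0], vector [0, l1, 0, 0],
                               vector [0, 0, l1, 0], vector [0, 0, 0, l2]]"

text \<open>Segre characteristic [(21)1]: A^{-1}B has, at eigenvalue l1, Jordan blocks of
  sizes 2 and 1, and at eigenvalue l2 a single block of size 1.\<close>
definition segre_21_1 :: "real^4^4 \<Rightarrow> real^4^4 \<Rightarrow> real \<Rightarrow> real \<Rightarrow> bool" where
  "segre_21_1 A B l1 l2 \<longleftrightarrow> l1 \<noteq> l2 \<and>
     (\<exists>P. invertible P \<and> matrix_inv P ** (matrix_inv A ** B) ** P = jordan_21_1 l1 l2)"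

datatype sgn = Pos | Neg

definition sgnr :: "sgn \<Rightarrow> real" where
  "sgnr s = (case s of Pos \<Rightarrow> 1 | Neg \<Rightarrow> -1)"

text \<open>Block symbols: \<open>Wr s\<close> is one wiggle with subscript sign s, \<open>Bar\<close> is a 1x1 block.\<close>
datatype blocksym = Wr sgn | Bar

text \<open>Index sequence <s0 sigma1 s1 sigma2 s2 ...>: list of values s_j and list of
  root strings sigma_j.\<close>
datatype idxseq = IdxSeq "nat list" "blocksym list list"

text \<open>Canonical forms diag(eps E_2, e2, e3) and diag(eps E_2 J_2(l1), e2 l1, e3 l2).\<close>
definition canA_21_1 :: "real \<Rightarrow> real \<Rightarrow> real \<Rightarrow> real^4^4" where
  "canA_21_1 e e2 e3 = vector [vector [0, e, 0, 0], vector [e, 0, 0, 0],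
                               vector [0, 0, e2, 0], vector [0, 0, 0, e3]]"

definition canB_21_1 :: "real \<Rightarrow> real \<Rightarrow> real \<Rightarrow> real \<Rightarrow> real \<Rightarrow> real^4^4" where
  "canB_21_1 e e2 e3 l1 l2 = vector [vector [0, e * l1, 0, 0], vector [e * l1, e, 0, 0],
                                     vector [0, 0, e2 * l1, 0], vector [0, 0, 0, e3 * l2]]"

definition index_sequence_21_1 :: "real^4^4 \<Rightarrow> real^4^4 \<Rightarrow> idxseq \<Rightarrow> bool" where
  "index_sequence_21_1 A B S \<longleftrightarrow>
     (\<exists>Q l1 l2 e e2 e3 s0 s1 s2.
        invertible Q \<and> l1 \<noteq> l2 \<and>
        transpose Q ** A ** Q = canA_21_1 (sgnr e) (sgnr e2) (sgnr e3) \<and>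
        transpose Q ** B ** Q = canB_21_1 (sgnr e) (sgnr e2) (sgnr e3) l1 l2 \<and>
        (\<forall>l. l < min l1 l2 \<longrightarrow> Id_pencil A B l = s0) \<and>
        (\<forall>l. min l1 l2 < l \<and> l < max l1 l2 \<longrightarrow> Id_pencil A B l = s1) \<and>
        (\<forall>l. max l1 l2 < l \<longrightarrow> Id_pencil A B l = s2) \<and>
        S = IdxSeq [s0, s1, s2]
              (if l1 < l2 then [[Wr e, Wr e, Bar], [Bar]] else [[Bar], [Wr e, Wr e, Bar]]))"

text \<open>Index sequence up to equivalence: equivalence is induced by change of basis
  of the pencil, (A,B) \<mapsto> (aA+bB, cA+dB) with ad-bc \<noteq> 0 (new A nonsingular).\<close>
definition index_sequence_equiv :: "real^4^4 \<Rightarrow> real^4^4 \<Rightarrow> idxseq \<Rightarrow> bool" where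
  "index_sequence_equiv A B S \<longleftrightarrow>
     (\<exists>a b c d. a * d - b * c \<noteq> 0 \<and> det (a *\<^sub>R A + b *\<^sub>R B) \<noteq> 0 \<and>
        index_sequence_21_1 (a *\<^sub>R A + b *\<^sub>R B) (c *\<^sub>R A + d *\<^sub>R B) S)"

definition seq_minus :: idxseq where
  "seq_minus = IdxSeq [1, 2, 3] [[Wr Neg, Wr Neg, Bar], [Bar]]"

definition seq_plus :: idxseq where
  "seq_plus = IdxSeq [1, 2, 3] [[Wr Pos, Wr Pos, Bar], [Bar]]"

text \<open>Projective points of PC^3 are represented by nonzero vectors in complex^4;
  sets of points by cones (closed under nonzero complex scaling).\<close>

definition cbil :: "complex^4^4 \<Rightarrow> complex^4 \<Rightarrow> complex^4 \<Rightarrow> complex" where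
  "cbil S X Y = (\<Sum>i\<in>UNIV. \<Sum>j\<in>UNIV. X$i * S$i$j * Y$j)"

definition clin :: "complex^4 \<Rightarrow> complex^4 \<Rightarrow> complex" where
  "clin u X = (\<Sum>i\<in>UNIV. u$i * X$i)"

definition cmat :: "real^4^4 \<Rightarrow> complex^4^4" where
  "cmat A = (\<chi> i j. complex_of_real (A$i$j))"

definition QSIC :: "real^4^4 \<Rightarrow> real^4^4 \<Rightarrow> (complex^4) set" where
  "QSIC A B = {X. X \<noteq> 0 \<and> cbil (cmat A) X X = 0 \<and> cbil (cmat B) X X = 0}"

text \<open>C is the (nondegenerate) conic cut by the plane u.X = 0 on the quadric X^T S X = 0,
  i.e. the restriction of the form S to the plane is nondegenerate.\<close>
definition conic_rep :: "(complex^4) set \<Rightarrow> complex^4 \<Rightarrow> complex^4^4 \<Rightarrow> bool" where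
  "conic_rep C u S \<longleftrightarrow> u \<noteq> 0 \<and> transpose S = S \<and>
     C = {X. X \<noteq> 0 \<and> clin u X = 0 \<and> cbil S X X = 0} \<and>
     (\<forall>Y. clin u Y = 0 \<and> (\<forall>Z. clin u Z = 0 \<longrightarrow> cbil S Y Z = 0) \<longrightarrow> Y = 0)"

definition is_conic :: "(complex^4) set \<Rightarrow> bool" where
  "is_conic C \<longleftrightarrow> (\<exists>u S. conic_rep C u S)"

definition real_vec :: "complex^4 \<Rightarrow> bool" where
  "real_vec X \<longleftrightarrow> (\<forall>i. Im (X$i) = 0)"

definition ppoint :: "complex^4 \<Rightarrow> (complex^4) set" where
  "ppoint X = {c *s X | c. c \<noteq> 0}"

definition real_points :: "(complex^4) set \<Rightarrow> (complex^4) set set" where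
  "real_points C = ppoint ` {X \<in> C. real_vec X}"

definition real_conic :: "(complex^4) set \<Rightarrow> bool" where
  "real_conic C \<longleftrightarrow> is_conic C \<and> infinite (real_points C)"

definition imaginary_conic :: "(complex^4) set \<Rightarrow> bool" where
  "imaginary_conic C \<longleftrightarrow> is_conic C \<and> finite (real_points C)"

text \<open>Two conics are tangent at P: they have the same tangent line at P.\<close>
definition tangent_at :: "(complex^4) set \<Rightarrow> (complex^4) set \<Rightarrow> complex^4 \<Rightarrow> bool" where
  "tangent_at C1 C2 P \<longleftrightarrow> P \<in> C1 \<and> P \<in> C2 \<and>
     (\<exists>u1 S1 u2 S2. conic_rep C1 u1 S1 \<and> conic_rep C2 u2 S2 \<and>
        {Y. clin u1 Y = 0 \<and> cbil S1 P Y = 0} = {Y. clin u2 Y = 0 \<and> cbil S2 P Y = 0})"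

definition tangent_at_one_real_point :: "(complex^4) set \<Rightarrow> (complex^4) set \<Rightarrow> bool" where
  "tangent_at_one_real_point C1 C2 \<longleftrightarrow>
     (\<exists>P. real_vec P \<and> P \<in> C1 \<inter> C2 \<and> ppoint ` (C1 \<inter> C2) = {ppoint P} \<and> tangent_at C1 C2 P)"

definition QSIC_two_conics :: "real^4^4 \<Rightarrow> real^4^4 \<Rightarrow> (complex^4) set \<Rightarrow> (complex^4) set \<Rightarrow> bool" where
  "QSIC_two_conics A B C1 C2 \<longleftrightarrow> is_conic C1 \<and> is_conic C2 \<and> C1 \<noteq> C2 \<and> QSIC A B = C1 \<union> C2"

end

theory Submission
  imports Defs
begin

lemma inner_real_vec: "(x::real^'n) \<bullet> y = (\<Sum>i\<in>UNIV. x$i * y$i)"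
  by (simp add: inner_vec_def)

lemma sym_dot:
  fixes M :: "real^'n^'n"
  assumes "transpose M = M"
  shows "x \<bullet> (M *v y) = (M *v x) \<bullet> y"
proof -
  have "x \<bullet> (M *v y) = (x v* M) \<bullet> y" by (simp add: dot_lmul_matrix)
  also have "x v* M = transpose M *v x" by (simp add: transpose_matrix_vector)
  finally show ?thesis using assms by simp
qed

lemma spectral_aux:
  fixes M :: "real^'n^'n"
  assumes sym: "transpose M = M"
  shows "subspace V \<Longrightarrow> (\<forall>x\<in>V. M *v x \<in> V) \<Longrightarrow> dim V = k \<Longrightarrow>
    \<exists>B. B \<subseteq> V \<and> finite B \<and> card B = k \<and> pairwise orthogonal B \<and>
        (\<forall>b\<in>B. norm b = 1 \<and> (\<exists>\<mu>. M *v b = \<mu> *\<^sub>R b))"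
proof (induction k arbitrary: V)
  case 0
  then show ?case by (intro exI[of _ "{}"]) auto
next
  case (Suc k)
  note sub = Suc.prems(1) and inv = Suc.prems(2) and dimV = Suc.prems(3)
  define q where "q = (\<lambda>x::real^'n. x \<bullet> (M *v x))"
  define S where "S = V \<inter> sphere 0 1"
  have "\<not> V \<subseteq> {0}" using dimV dim_eq_0[of V] by auto
  then obtain v0 where v0: "v0 \<in> V" "v0 \<noteq> 0" by auto
  have "(1 / norm v0) *\<^sub>R v0 \<in> S" using v0 sub unfolding S_def
    by (auto simp: subspace_scale)
  then have Sne: "S \<noteq> {}" by auto
  have Scomp: "compact S" unfolding S_def
    using closed_subspace[OF sub] compact_sphere by (simp add: closed_Int_compact)
  have "continuous_on S (\<lambda>x. M *v x)"
    by (rule matrix_vector_mult_linear_continuous_on)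
  then have "continuous_on S q" unfolding q_def
    by (intro continuous_intros)
  from continuous_attains_sup[OF Scomp Sne this]
  obtain v where vS: "v \<in> S" and vmax: "\<And>y. y \<in> S \<Longrightarrow> q y \<le> q v" by blast
  define \<mu> where "\<mu> = q v"
  have vV: "v \<in> V" and nv: "norm v = 1" using vS by (auto simp: S_def)
  have vv: "v \<bullet> v = 1" using nv by (simp add: dot_square_norm)
  have bound: "q y \<le> \<mu> * (y \<bullet> y)" if "y \<in> V" for y
  proof (cases "y = 0")
    case True then show ?thesis by (simp add: q_def)
  next
    case False
    have "(1 / norm y) *\<^sub>R y \<in> S" using that False sub by (auto simp: S_def subspace_scale)
    then have "q ((1 / norm y) *\<^sub>R y) \<le> \<mu>" using vmax \<mu>_def by auto
    moreover have "q ((1 / norm y) *\<^sub>R y) = q y / (norm y)^2"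
      by (simp add: q_def matrix_vector_mult_scaleR power2_eq_square)
    ultimately have "q y / (norm y)^2 \<le> \<mu>" by simp
    moreover have "(norm y)^2 > 0" using False by simp
    ultimately have "q y \<le> \<mu> * (norm y)^2" by (simp add: divide_le_eq)
    then show ?thesis by (simp add: dot_square_norm)
  qed
  have perp: "w \<bullet> (M *v v - \<mu> *\<^sub>R v) = 0" if wV: "w \<in> V" for w
  proof -
    define c where "c = w \<bullet> (M *v v - \<mu> *\<^sub>R v)"
    define K where "K = q w - \<mu> * (w \<bullet> w)"
    have K: "K \<le> 0" using bound[OF wV] by (simp add: K_def)
    have ineq: "2 * t * c + t^2 * K \<le> 0" for t
    proof -
      have "v + t *\<^sub>R w \<in> V" using vV wV sub by (simp add: subspace_add subspace_scale)
      then have b: "q (v + t *\<^sub>R w) \<le> \<mu> * ((v + t *\<^sub>R w) \<bullet> (v + t *\<^sub>R w))" by (rule bound)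
      have e1: "q (v + t *\<^sub>R w) = q v + 2 * t * (w \<bullet> (M *v v)) + t^2 * q w"
        unfolding q_def
        using sym_dot[OF sym, of v w] sym_dot[OF sym, of w v]
        by (simp add: matrix_vector_right_distrib matrix_vector_mult_scaleR inner_add_left inner_add_right
              algebra_simps power2_eq_square inner_commute)
      have e2: "(v + t *\<^sub>R w) \<bullet> (v + t *\<^sub>R w) = 1 + 2 * t * (w \<bullet> v) + t^2 * (w \<bullet> w)"
        using vv by (simp add: inner_add_left inner_add_right algebra_simps power2_eq_square inner_commute)
      have c_eq: "c = w \<bullet> (M *v v) - \<mu> * (w \<bullet> v)" by (simp add: c_def inner_diff_right)
      have "2 * t * c + t^2 * K = (q v + 2 * t * (w \<bullet> (M *v v)) + t^2 * q w)
          - \<mu> * (1 + 2 * t * (w \<bullet> v) + t^2 * (w \<bullet> w))"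
        unfolding c_eq K_def \<mu>_def by (simp add: algebra_simps power2_eq_square)
      moreover have "q v + 2 * t * (w \<bullet> (M *v v)) + t^2 * q w
          \<le> \<mu> * (1 + 2 * t * (w \<bullet> v) + t^2 * (w \<bullet> w))" using b e1 e2 by simp
      ultimately show ?thesis by linarith
    qed
    define s where "s = 1 / (1 - K)"
    have s: "s > 0" using K by (simp add: s_def)
    have "2 * (s*c) * c + (s*c)^2 * K \<le> 0" by (rule ineq)
    then have "s * c^2 * (2 + s * K) \<le> 0" by (simp add: algebra_simps power2_eq_square)
    moreover have "2 + s * K > 0"
    proof -
      have "s * K = K / (1 - K)" by (simp add: s_def)
      moreover have "K / (1 - K) > -1" using K by (simp add: divide_simps)
      ultimately show ?thesis by simp
    qed
    ultimately have "s * c^2 \<le> 0" by (simp add: mult_le_0_iff)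
    then have "c^2 \<le> 0" using s by (simp add: mult_le_0_iff)
    then show ?thesis unfolding c_def by simp
  qed
  have Mvin: "M *v v - \<mu> *\<^sub>R v \<in> V" using inv vV sub by (simp add: subspace_diff subspace_scale)
  have eig: "M *v v = \<mu> *\<^sub>R v" using perp[OF Mvin] by simp
  define W where "W = {y \<in> V. v \<bullet> y = 0}"
  have subW: "subspace W" unfolding W_def subspace_def using sub
    by (auto simp: subspace_def inner_add_right)
  have invW: "\<forall>x\<in>W. M *v x \<in> W"
  proof
    fix x assume x: "x \<in> W"
    have "v \<bullet> (M *v x) = (M *v v) \<bullet> x" by (rule sym_dot[OF sym])
    also have "\<dots> = 0" using eig x by (simp add: W_def)
    finally show "M *v x \<in> W" using inv x by (simp add: W_def)
  qed
  have subL: "subspace (span {v})" by simp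
  have sum_eq: "{x + y |x y. x \<in> W \<and> y \<in> span {v}} = V"
  proof
    show "{x + y |x y. x \<in> W \<and> y \<in> span {v}} \<subseteq> V"
      using sub vV by (auto simp: W_def span_singleton subspace_add subspace_scale)
  next
    show "V \<subseteq> {x + y |x y. x \<in> W \<and> y \<in> span {v}}"
    proof
      fix y assume y: "y \<in> V"
      have "y - (v \<bullet> y) *\<^sub>R v \<in> W"
        using y vV sub vv by (simp add: W_def subspace_diff subspace_scale inner_diff_right)
      moreover have "(v \<bullet> y) *\<^sub>R v \<in> span {v}" by (auto simp: span_singleton)
      ultimately show "y \<in> {x + y |x y. x \<in> W \<and> y \<in> span {v}}"
        by (intro CollectI exI[of _ "y - (v \<bullet> y) *\<^sub>R v"] exI[of _ "(v \<bullet> y) *\<^sub>R v"]) auto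
    qed
  qed
  have int0: "W \<inter> span {v} = {0}"
  proof -
    have "x = 0" if xW: "x \<in> W" and xL: "x \<in> span {v}" for x
    proof -
      obtain a where "x = a *\<^sub>R v" using xL by (auto simp: span_singleton)
      moreover have "v \<bullet> x = 0" using xW by (simp add: W_def)
      ultimately show ?thesis using vv by simp
    qed
    moreover have "0 \<in> W" using sub by (simp add: W_def subspace_0)
    ultimately show ?thesis using span_zero by auto
  qed
  have dv: "dim (span {v}) = 1" using nv by (auto simp: dim_insert)
  have "dim W = k" using dim_sums_Int[OF subW subL] sum_eq int0 dv dimV by simp
  from Suc.IH[OF subW invW this] obtain B where B: "B \<subseteq> W" "finite B" "card B = k"
    "pairwise orthogonal B" "\<forall>b\<in>B. norm b = 1 \<and> (\<exists>\<mu>. M *v b = \<mu> *\<^sub>R b)" by blast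
  have vnB: "v \<notin> B" using B(1) vv by (auto simp: W_def)
  show ?case
  proof (intro exI[of _ "insert v B"] conjI)
    show "insert v B \<subseteq> V" using B(1) vV by (auto simp: W_def)
    show "finite (insert v B)" using B by simp
    show "card (insert v B) = Suc k" using B vnB by simp
    show "pairwise orthogonal (insert v B)"
      using B(1,4) by (auto simp: pairwise_insert W_def orthogonal_def inner_commute)
    show "\<forall>b\<in>insert v B. norm b = 1 \<and> (\<exists>\<mu>. M *v b = \<mu> *\<^sub>R b)" using B(5) nv eig by auto
  qed
qed


lemma matrix_inv_props:
  fixes A :: "'a::semiring_1^'n^'n"
  assumes "invertible A"
  shows "A ** matrix_inv A = mat 1" "matrix_inv A ** A = mat 1"
  using someI_ex[OF assms[unfolded invertible_def]] unfolding matrix_inv_def by auto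

lemma matrix_sub_ldistrib:
  fixes A :: "'a::ring_1^'n^'m"
  shows "A ** (B - C) = A ** B - A ** C"
  by (simp add: matrix_matrix_mult_def vec_eq_iff sum_subtractf right_diff_distrib)

lemma matrix_sub_rdistrib:
  fixes A :: "'a::ring_1^'n^'m"
  shows "(A - B) ** C = A ** C - B ** C"
  by (simp add: matrix_matrix_mult_def vec_eq_iff sum_subtractf left_diff_distrib)

lemma matrix_scaleR_left:
  fixes A :: "real^'n^'m"
  shows "(k *\<^sub>R A) ** B = k *\<^sub>R (A ** B)"
  by (simp add: matrix_matrix_mult_def vec_eq_iff sum_distrib_left mult.assoc)

lemma matrix_scaleR_right:
  fixes A :: "real^'n^'m"
  shows "A ** (k *\<^sub>R B) = k *\<^sub>R (A ** B)"
  by (simp add: matrix_matrix_mult_def vec_eq_iff sum_distrib_left algebra_simps)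

definition diagm :: "('n::finite \<Rightarrow> real) \<Rightarrow> real^'n^'n" where
  "diagm d = (\<chi> i j. if i = j then d j else 0)"

lemma spectral_matrix:
  fixes M :: "real^'n^'n"
  assumes sym: "transpose M = M"
  shows "\<exists>(U::real^'n^'n) \<mu>. transpose U ** U = mat 1 \<and> M ** U = U ** diagm \<mu>"
proof -
  have "dim (UNIV :: (real^'n) set) = CARD('n)" by simp
  from spectral_aux[OF sym subspace_UNIV _ this] obtain B where
    B: "finite B" "card B = CARD('n)" "pairwise orthogonal B"
       "\<forall>b\<in>B. norm b = 1 \<and> (\<exists>\<mu>. M *v b = \<mu> *\<^sub>R b)" by auto
  have "\<exists>h. bij_betw h (UNIV :: 'n set) B" using B by (intro finite_same_card_bij) auto
  then obtain f :: "'n \<Rightarrow> real^'n" where f: "bij_betw f UNIV B" by blast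
  define \<mu> where "\<mu> = (\<lambda>j. SOME m. M *v f j = m *\<^sub>R f j)"
  have fB: "f j \<in> B" for j using f by (auto simp: bij_betw_def)
  have eig: "M *v f j = \<mu> j *\<^sub>R f j" for j
    unfolding \<mu>_def using B(4) fB[of j] by (metis (mono_tags, lifting) someI_ex)
  have nrm: "f j \<bullet> f j = 1" for j using B(4) fB[of j] by (simp add: dot_square_norm)
  have orth: "f i \<bullet> f j = 0" if "i \<noteq> j" for i j
  proof -
    have "f i \<noteq> f j" using f that by (auto simp: bij_betw_def inj_on_def)
    then show ?thesis using B(3) fB[of i] fB[of j] by (auto simp: pairwise_def orthogonal_def)
  qed
  define U :: "real^'n^'n" where "U = (\<chi> i j. f j $ i)"
  have "transpose U ** U = mat 1"
  proof -
    have "(transpose U ** U) $ i $ j = (if i = j then 1 else 0)" for i j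
      using nrm[of i] orth[of i j]
      by (auto simp: matrix_matrix_mult_def transpose_def U_def inner_real_vec)
    then show ?thesis by (simp add: vec_eq_iff mat_def)
  qed
  moreover have "M ** U = U ** diagm \<mu>"
  proof -
    have "(M ** U) $ i $ j = (M *v f j) $ i" for i j
      by (simp add: matrix_matrix_mult_def matrix_vector_mult_def U_def)
    moreover have "(U ** diagm \<mu>) $ i $ j = \<mu> j * f j $ i" for i j
    proof -
      have "(U ** diagm \<mu>) $ i $ j = (\<Sum>k\<in>UNIV. (if k = j then f k $ i * \<mu> j else 0))"
        by (simp add: matrix_matrix_mult_def U_def diagm_def if_distrib cong: if_cong)
      also have "\<dots> = \<mu> j * f j $ i" by simp
      finally show ?thesis .
    qed
    ultimately show ?thesis using eig by (simp add: vec_eq_iff)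
  qed
  ultimately show ?thesis by blast
qed

lemma poly_det:
  fixes A :: "'a::comm_ring_1 poly^'n^'n"
  shows "poly (det A) x = det (\<chi> i j. poly (A$i$j) x)"
  unfolding det_def by (simp add: poly_sum poly_prod)

lemma charpoly_eval:
  "poly (charpoly4 M) x = det (x *\<^sub>R mat 1 - M)"
proof -
  have "(\<chi> i j. poly ((\<chi> i j. (if i = j then [:0, 1:] else 0) - [: M$i$j :]) $ i $ j) x)
      = x *\<^sub>R mat 1 - M"
    by (simp add: vec_eq_iff mat_def)
  then show ?thesis unfolding charpoly4_def poly_det by simp
qed

lemma charpoly_diag:
  fixes M U :: "real^4^4" and \<mu> :: "4 \<Rightarrow> real"
  assumes U: "transpose U ** U = mat 1" and MU: "M ** U = U ** diagm \<mu>"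
  shows "charpoly4 M = (\<Prod>i\<in>UNIV. [:- \<mu> i, 1:])"
proof -
  have U2: "U ** transpose U = mat 1" using matrix_left_right_inverse1[OF U] .
  have Meq: "M = U ** diagm \<mu> ** transpose U"
    by (metis MU U2 matrix_mul_assoc matrix_mul_rid)
  have "poly (charpoly4 M) x = poly (\<Prod>i\<in>UNIV. [:- \<mu> i, 1:]) x" for x
  proof -
    have "x *\<^sub>R mat 1 - M = U ** (x *\<^sub>R mat 1 - diagm \<mu>) ** transpose U"
      by (simp add: Meq matrix_sub_ldistrib matrix_sub_rdistrib matrix_scaleR_left matrix_scaleR_right U2 matrix_mul_assoc)
    then have "det (x *\<^sub>R mat 1 - M) = det (x *\<^sub>R mat 1 - diagm \<mu>) * (det U * det (transpose U))"
      by (simp add: det_mul)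
    also have "det U * det (transpose U) = 1" using U2 det_mul[of U "transpose U"] by simp
    also have "det (x *\<^sub>R mat 1 - diagm \<mu>) = (\<Prod>i\<in>UNIV. x - \<mu> i)"
      by (subst det_diagonal) (auto simp: diagm_def mat_def)
    finally show ?thesis by (simp add: charpoly_eval poly_prod)
  qed
  then show ?thesis using poly_eq_poly_eq_iff by blast
qed

lemma order_prod_linear:
  fixes \<mu> :: "'i \<Rightarrow> real"
  assumes "finite I"
  shows "order r (\<Prod>i\<in>I. [:- \<mu> i, 1:]) = card {i\<in>I. \<mu> i = r}"
  using assms
proof (induction I rule: finite_induct)
  case empty
  then show ?case by (simp add: order_0I)
next
  case (insert j I)
  have nz0: "\<forall>i. [:- \<mu> i, 1:] \<noteq> (0::real poly)" by simp
  have nz: "(\<Prod>i\<in>insert j I. [:- \<mu> i, 1:]) \<noteq> 0"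
    using insert.hyps(1) prod_zero_iff[of "insert j I" "\<lambda>i. [:- \<mu> i, 1:]"] nz0
    by (simp del: prod.insert)
  have o1: "order r [:- \<mu> j, 1:] = (if \<mu> j = r then 1 else 0)"
  proof (cases "\<mu> j = r")
    case True then show ?thesis using order_power_n_n[of r 1] by simp
  next
    case False then show ?thesis by (simp add: order_0I)
  qed
  have "order r (\<Prod>i\<in>insert j I. [:- \<mu> i, 1:]) =
        order r [:- \<mu> j, 1:] + order r (\<Prod>i\<in>I. [:- \<mu> i, 1:])"
    unfolding prod.insert[OF insert.hyps] using nz unfolding prod.insert[OF insert.hyps] by (rule order_mult)
  also have "\<dots> = card {i\<in>insert j I. \<mu> i = r}"
  proof (cases "\<mu> j = r")
    case True
    have "{i\<in>insert j I. \<mu> i = r} = insert j {i\<in>I. \<mu> i = r}" using True by auto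
    then show ?thesis using insert o1 True by simp
  next
    case False
    have "{i\<in>insert j I. \<mu> i = r} = {i\<in>I. \<mu> i = r}" using False by auto
    then show ?thesis using insert o1 False by simp
  qed
  finally show ?case .
qed

lemma npos_diag:
  fixes M :: "real^4^4" and \<mu> :: "4 \<Rightarrow> real"
  assumes cp: "charpoly4 M = (\<Prod>i\<in>UNIV. [:- \<mu> i, 1:])"
  shows "npos_eig M = card {i. \<mu> i > 0}"
proof -
  let ?p = "(\<Prod>i\<in>UNIV. [:- \<mu> i, 1:])"
  have pz: "poly ?p x = 0 \<longleftrightarrow> (\<exists>i. \<mu> i = x)" for x
  proof -
    have "poly ?p x = (\<Prod>i\<in>UNIV. x - \<mu> i)" by (simp add: poly_prod)
    then show ?thesis using prod_zero_iff[of "UNIV::4 set" "\<lambda>i. x - \<mu> i"] by auto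
  qed
  have R: "{r. r > 0 \<and> poly ?p r = 0} = \<mu> ` {i. \<mu> i > 0}"
    unfolding pz by auto
  have "npos_eig M = (\<Sum>r\<in>\<mu> ` {i. \<mu> i > 0}. card {i. \<mu> i = r})"
    unfolding npos_eig_def cp R by (simp add: order_prod_linear)
  also have "\<dots> = (\<Sum>r\<in>\<mu> ` {i. \<mu> i > 0}. card {i\<in>{i. \<mu> i > 0}. \<mu> i = r})"
    by (intro sum.cong refl arg_cong[where f=card]) auto
  also have "\<dots> = card {i. \<mu> i > 0}"
    using sum.image_gen[of "{i. \<mu> i > 0}" "\<lambda>_. 1::nat" \<mu>] by simp
  finally show ?thesis .
qed


lemma Basis_real_vec: "(b \<in> (Basis :: (real^'n) set)) \<longleftrightarrow> (\<exists>i. b = axis i 1)"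
  by (auto simp: Basis_vec_def)

lemma dim_coord_subspace:
  "dim {x::real^'n. \<forall>i. i \<notin> K \<longrightarrow> x$i = 0} = card K"
proof -
  let ?d = "(\<lambda>i. axis i (1::real)) ` K"
  have dB: "?d \<subseteq> Basis" by (auto simp: Basis_real_vec)
  have eq: "{x::real^'n. \<forall>b\<in>Basis. b \<notin> ?d \<longrightarrow> x \<bullet> b = 0} = {x. \<forall>i. i \<notin> K \<longrightarrow> x$i = 0}"
  proof (intro set_eqI iffI; clarsimp)
    fix x :: "real^'n" and i
    assume h: "\<forall>b\<in>Basis. b \<notin> ?d \<longrightarrow> x \<bullet> b = 0" and i: "i \<notin> K"
    have "axis i 1 \<notin> ?d" using i by (auto simp: axis_eq_axis)
    moreover have "axis i (1::real) \<in> Basis" by (auto simp: Basis_real_vec)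
    ultimately have "x \<bullet> axis i 1 = 0" using h by blast
    then show "x $ i = 0" by (simp add: inner_axis)
  next
    fix x :: "real^'n" and b
    assume h: "\<forall>i. i \<notin> K \<longrightarrow> x $ i = 0" and b: "b \<in> Basis" "b \<notin> ?d"
    then obtain i where bi: "b = axis i 1" by (auto simp: Basis_real_vec)
    then have "i \<notin> K" using b by auto
    then show "x \<bullet> b = 0" using h bi by (simp add: inner_axis)
  qed
  have "card ?d = card K" by (intro card_image) (auto simp: inj_on_def axis_eq_axis)
  then show ?thesis using dim_substandard[OF dB] eq by simp
qed

lemma subspace_coord: "subspace {x::real^'n. \<forall>i. i \<notin> K \<longrightarrow> x$i = 0}"
  by (auto simp: subspace_def)

lemma diagm_mv: "(diagm d *v x) $ i = d i * x $ i"
proof -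
  have "\<And>j. (diagm d)$i$j * x$j = (if i = j then d i * x $ i else 0)" by (simp add: diagm_def)
  then have "(diagm d *v x) $ i = (\<Sum>j\<in>UNIV. if i = j then d i * x $ i else 0)"
    by (simp add: matrix_vector_mult_def)
  then show ?thesis by simp
qed

lemma quad_diag: "x \<bullet> (diagm d *v x) = (\<Sum>i\<in>UNIV. d i * (x$i)^2)"
  by (simp add: inner_real_vec diagm_mv power2_eq_square algebra_simps)

lemma quad_congr:
  fixes W :: "real^'n^'n"
  shows "x \<bullet> ((transpose W ** D ** W) *v x) = (W *v x) \<bullet> (D *v (W *v x))"
proof -
  have "x \<bullet> ((transpose W ** D ** W) *v x) = x \<bullet> (transpose W *v (D *v (W *v x)))"
    by (simp add: matrix_vector_mul_assoc[symmetric] matrix_mul_assoc)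
  also have "\<dots> = (x v* transpose W) \<bullet> (D *v (W *v x))" by (rule dot_lmul_matrix[symmetric])
  also have "x v* transpose W = W *v x"
    using transpose_matrix_vector[of "transpose W" x] by simp
  finally show ?thesis .
qed

lemma inertia_le:
  fixes W :: "real^'n^'n" and d1 d2 :: "'n \<Rightarrow> real"
  assumes inv: "invertible W" and eq: "transpose W ** diagm d2 ** W = diagm d1"
  shows "card {i. d1 i > 0} \<le> card {i. d2 i > 0}"
proof (rule ccontr)
  assume contra: "\<not> ?thesis"
  define I where "I = {i. d1 i > 0}"
  define J where "J = {j. \<not> d2 j > 0}"
  define V where "V = {x::real^'n. \<forall>i. i \<notin> I \<longrightarrow> x$i = 0}"
  define Z where "Z = {x::real^'n. \<forall>i. i \<notin> J \<longrightarrow> x$i = 0}"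
  let ?f = "(*v) W"
  have lin: "linear ?f" by (rule matrix_vector_mul_linear)
  have injf: "inj ?f" by (rule inj_matrix_vector_mult[OF inv])
  have subV: "subspace V" and subZ: "subspace Z" unfolding V_def Z_def by (rule subspace_coord)+
  have subfV: "subspace (?f ` V)" by (rule linear_subspace_image[OF lin subV])
  have dfV: "dim (?f ` V) = card I"
    using dim_image_eq[OF lin, of V] injf dim_coord_subspace[of I] unfolding V_def
    by (simp add: inj_on_subset)
  have dZ: "dim Z = card J" unfolding Z_def by (rule dim_coord_subspace)
  have cJ: "card J + card {i. d2 i > 0} = CARD('n)"
  proof -
    have "J \<union> {i. d2 i > 0} = UNIV" "J \<inter> {i. d2 i > 0} = {}" by (auto simp: J_def)
    then show ?thesis using card_Un_disjoint[of J "{i. d2 i > 0}"] by simp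
  qed
  have "dim {x + y |x y. x \<in> ?f ` V \<and> y \<in> Z} \<le> CARD('n)"
    using dim_subset_UNIV[of "{x + y |x y. x \<in> ?f ` V \<and> y \<in> Z}"] by simp
  moreover have "card I > card {i. d2 i > 0}" using contra by (simp add: I_def)
  ultimately have "dim (?f ` V \<inter> Z) > 0"
    using dim_sums_Int[OF subfV subZ] dfV dZ cJ by linarith
  then have "\<not> (?f ` V \<inter> Z \<subseteq> {0})" using dim_eq_0 by (metis not_gr_zero)
  then obtain x where xV: "x \<in> V" and yZ: "W *v x \<in> Z" and y0: "W *v x \<noteq> 0" by auto
  have x0: "x \<noteq> 0" using y0 by auto
  then obtain k where k: "x $ k \<noteq> 0" by (auto simp: vec_eq_iff)
  have kI: "k \<in> I" using xV k by (auto simp: V_def)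
  have "x \<bullet> (diagm d1 *v x) > 0"
  proof -
    have nn: "\<forall>i\<in>UNIV. 0 \<le> d1 i * (x$i)^2"
    proof
      fix i :: 'n
      show "0 \<le> d1 i * (x$i)^2"
      proof (cases "d1 i > 0")
        case True then show ?thesis by simp
      next
        case False then have "x$i = 0" using xV by (auto simp: V_def I_def)
        then show ?thesis by simp
      qed
    qed
    have "d1 k * (x$k)^2 > 0" using kI k by (simp add: I_def)
    also have "d1 k * (x$k)^2 \<le> (\<Sum>i\<in>UNIV. d1 i * (x$i)^2)"
      by (rule member_le_sum) (use nn in auto)
    finally show ?thesis by (simp add: quad_diag)
  qed
  moreover have "(W *v x) \<bullet> (diagm d2 *v (W *v x)) \<le> 0"
    unfolding quad_diag
  proof (intro sum_nonpos)
    fix i :: 'n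
    show "d2 i * ((W *v x) $ i)^2 \<le> 0"
    proof (cases "d2 i > 0")
      case True then have "(W *v x) $ i = 0" using yZ by (auto simp: Z_def J_def)
      then show ?thesis by simp
    next
      case False then show ?thesis by (simp add: mult_nonpos_nonneg)
    qed
  qed
  ultimately show False using quad_congr[of x W "diagm d2"] eq by simp
qed

lemma sylvester:
  fixes M S :: "real^4^4" and d :: "4 \<Rightarrow> real"
  assumes sym: "transpose M = M" and invS: "invertible S"
    and Meq: "M = transpose S ** diagm d ** S"
  shows "npos_eig M = card {i. d i > 0}"
proof -
  obtain U :: "real^4^4" and \<mu> where U: "transpose U ** U = mat 1" and MU: "M ** U = U ** diagm \<mu>"
    using spectral_matrix[OF sym] by blast
  have np: "npos_eig M = card {i. \<mu> i > 0}"
    using npos_diag[OF charpoly_diag[OF U MU]] .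
  have U2: "U ** transpose U = mat 1" using matrix_left_right_inverse1[OF U] .
  have invU: "invertible U" using U U2 unfolding invertible_def by blast
  have Dmu: "diagm \<mu> = transpose U ** M ** U"
    by (metis MU U matrix_mul_assoc matrix_mul_lid)
  define W where "W = S ** U"
  have invW: "invertible W" unfolding W_def by (rule invertible_mult[OF invS invU])
  have e1: "transpose W ** diagm d ** W = diagm \<mu>"
    by (simp add: Dmu Meq W_def matrix_transpose_mul matrix_mul_assoc)
  define W' where "W' = matrix_inv W"
  have WW': "W ** W' = mat 1" "W' ** W = mat 1" using matrix_inv_props[OF invW] by (auto simp: W'_def)
  have invW': "invertible W'" using WW' unfolding invertible_def by blast
  have e2: "transpose W' ** diagm \<mu> ** W' = diagm d"
  proof -
    have "transpose W' ** diagm \<mu> ** W' = transpose (W ** W') ** diagm d ** (W ** W')"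
      by (simp add: e1[symmetric] matrix_transpose_mul matrix_mul_assoc)
    then show ?thesis using WW' by (simp add: transpose_mat)
  qed
  have "card {i. \<mu> i > 0} \<le> card {i. d i > 0}" by (rule inertia_le[OF invW e1])
  moreover have "card {i. d i > 0} \<le> card {i. \<mu> i > 0}" by (rule inertia_le[OF invW' e2])
  ultimately show ?thesis using np by simp
qed


lemma vector_4 [simp]:
 "(vector [a,b,c,d] ::('a::zero)^4)$1 = a"
 "(vector [a,b,c,d] ::('a::zero)^4)$2 = b"
 "(vector [a,b,c,d] ::('a::zero)^4)$3 = c"
 "(vector [a,b,c,d] ::('a::zero)^4)$4 = d"
  unfolding vector_def by simp_all

lemma card4: "card {i::4. P i} = (if P 1 then 1 else 0) + (if P 2 then 1 else 0) + (if P 3 then 1 else 0) + (if P 4 then 1 else 0)"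
proof -
  have "card {i::4. P i} = card {i\<in>UNIV. P i}" by simp
  also have "\<dots> = (\<Sum>i\<in>{i\<in>UNIV. P i}. (1::nat))" by simp
  also have "\<dots> = (\<Sum>i\<in>UNIV. if P i then 1 else 0)" by (rule sum.inter_filter) simp
  finally show ?thesis by (simp add: sum_4)
qed

lemma mat4_eq: "(X::'a^4^4) = Y \<longleftrightarrow> (\<forall>i j. X$i$j = Y$i$j)"
  by (simp add: vec_eq_iff)

definition gpat :: "real \<Rightarrow> real \<Rightarrow> real \<Rightarrow> real \<Rightarrow> real \<Rightarrow> real^4^4" where
  "gpat a b c d f = vector [vector [0, a, 0, 0], vector [a, b, c, 0], vector [0, c, d, 0], vector [0, 0, 0, f]]"

definition rpat :: "real \<Rightarrow> real \<Rightarrow> real \<Rightarrow> real \<Rightarrow> real \<Rightarrow> real^4^4" where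
  "rpat \<alpha> \<beta> \<gamma> \<epsilon> \<zeta> = vector [vector [\<alpha>, \<beta>, \<gamma>, 0], vector [0, \<alpha>, 0, 0], vector [0, 0, \<epsilon>, 0], vector [0, 0, 0, \<zeta>]]"

lemma rgr:
  "transpose (rpat \<alpha> \<beta> \<gamma> \<epsilon> \<zeta>) ** gpat a b c d f ** rpat \<alpha> \<beta> \<gamma> \<epsilon> \<zeta> =
   gpat (\<alpha>*\<alpha>*a) (\<alpha>*\<alpha>*b + 2*\<alpha>*\<beta>*a) (\<alpha>*\<gamma>*a + \<alpha>*\<epsilon>*c) (\<epsilon>*\<epsilon>*d) (\<zeta>*\<zeta>*f)"
  unfolding mat4_eq forall_4
  by (simp add: matrix_matrix_mult_def transpose_def sum_4 gpat_def rpat_def algebra_simps)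

lemma canA_gpat: "canA_21_1 e e2 e3 = gpat e 0 0 e2 e3"
  unfolding mat4_eq forall_4 by (simp add: canA_21_1_def gpat_def)

lemma canB_gpat: "canB_21_1 e e2 e3 l1 l2 = gpat (e*l1) e 0 (e2*l1) (e3*l2)"
  unfolding mat4_eq forall_4 by (simp add: canB_21_1_def gpat_def)

lemma gpat_J: "gpat a b c d f ** jordan_21_1 l1 l2 = gpat (a*l1) (a + b*l1) (c*l1) (d*l1) (f*l2)"
  unfolding mat4_eq forall_4
  by (simp add: matrix_matrix_mult_def sum_4 gpat_def jordan_21_1_def algebra_simps)

lemma invertible_rpat:
  assumes "\<alpha> \<noteq> 0" "\<epsilon> \<noteq> 0" "\<zeta> \<noteq> 0"
  shows "invertible (rpat \<alpha> \<beta> \<gamma> \<epsilon> \<zeta>)"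
proof -
  define Ri :: "real^4^4" where "Ri = vector [vector [1/\<alpha>, -\<beta>/(\<alpha>*\<alpha>), -\<gamma>/(\<alpha>*\<epsilon>), 0],
     vector [0, 1/\<alpha>, 0, 0], vector [0, 0, 1/\<epsilon>, 0], vector [0, 0, 0, 1/\<zeta>]]"
  have "rpat \<alpha> \<beta> \<gamma> \<epsilon> \<zeta> ** Ri = mat 1"
    unfolding mat4_eq forall_4 using assms
    by (simp add: matrix_matrix_mult_def sum_4 rpat_def Ri_def mat_def field_simps)
  moreover have "Ri ** rpat \<alpha> \<beta> \<gamma> \<epsilon> \<zeta> = mat 1"
    unfolding mat4_eq forall_4 using assms
    by (simp add: matrix_matrix_mult_def sum_4 rpat_def Ri_def mat_def field_simps)
  ultimately show ?thesis unfolding invertible_def by blast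
qed

lemma transpose_sym_mult:
  fixes A P :: "real^4^4"
  assumes "transpose A = A"
  shows "transpose (transpose P ** A ** P) = transpose P ** A ** P"
  using assms by (simp add: matrix_transpose_mul matrix_mul_assoc)

lemma inv_ker:
  fixes G :: "real^4^4"
  assumes "invertible G" "G *v x = 0"
  shows "x = 0"
  using inj_matrix_vector_mult[OF assms(1)] assms(2) by (metis injD matrix_vector_mult_0_right)

lemma sgn_choice:
  fixes a :: real
  assumes "a \<noteq> 0"
  shows "\<exists>e. sgnr e * a > 0 \<and> (1 / sqrt \<bar>a\<bar>) * (1 / sqrt \<bar>a\<bar>) * a = sgnr e"
proof (cases "a > 0")
  case True
  then show ?thesis by (intro exI[of _ Pos]) (simp add: sgnr_def)
next
  case False
  then show ?thesis using assms by (intro exI[of _ Neg]) (simp add: sgnr_def)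
qed

lemma canon_exists:
  fixes A B P :: "real^4^4"
  assumes symA: "transpose A = A" and symB: "transpose B = B" and invA: "invertible A"
    and invP: "invertible P" and BP: "B ** P = A ** P ** jordan_21_1 l1 l2" and l12: "l1 \<noteq> l2"
  shows "\<exists>Q e e2 e3. invertible Q \<and>
           transpose Q ** A ** Q = canA_21_1 (sgnr e) (sgnr e2) (sgnr e3) \<and>
           transpose Q ** B ** Q = canB_21_1 (sgnr e) (sgnr e2) (sgnr e3) l1 l2 \<and>
           sgnr e2 * (transpose P ** A ** P) $ 3 $ 3 > 0 \<and>
           sgnr e3 * (transpose P ** A ** P) $ 4 $ 4 > 0"
proof -
  define G where "G = transpose P ** A ** P"
  define J where "J = jordan_21_1 l1 l2"
  have symG: "transpose G = G" unfolding G_def by (rule transpose_sym_mult[OF symA])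
  have H: "transpose P ** B ** P = G ** J"
  proof -
    have "transpose P ** B ** P = transpose P ** (B ** P)" by (simp add: matrix_mul_assoc)
    also have "\<dots> = transpose P ** (A ** P ** J)" using BP by (simp add: J_def)
    also have "\<dots> = G ** J" by (simp add: G_def matrix_mul_assoc)
    finally show ?thesis .
  qed
  have symH: "transpose (G ** J) = G ** J"
    using transpose_sym_mult[OF symB, of P] H by simp
  have GJ: "G ** J = transpose J ** G"
    using symH symG by (simp add: matrix_transpose_mul)
  have Gs: "G$i$j = G$j$i" for i j
  proof -
    have "(transpose G)$i$j = G$j$i" by (simp add: transpose_def)
    then show ?thesis using symG by simp
  qed
  have eqs: "(G ** J)$i$j = (transpose J ** G)$i$j" for i j using GJ by simp
  have e14: "(G ** J)$1$4 = G$1$4 * l2" "(transpose J ** G)$1$4 = l1 * G$1$4"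
    by (simp_all add: matrix_matrix_mult_def sum_4 J_def jordan_21_1_def transpose_def)
  have G14: "G$1$4 = 0" using eqs[of 1 4] e14 l12 by (simp add: mult.commute)
  have e34: "(G ** J)$3$4 = G$3$4 * l2" "(transpose J ** G)$3$4 = l1 * G$3$4"
    by (simp_all add: matrix_matrix_mult_def sum_4 J_def jordan_21_1_def transpose_def)
  have G34: "G$3$4 = 0" using eqs[of 3 4] e34 l12 by (simp add: mult.commute)
  have e24: "(G ** J)$2$4 = G$2$4 * l2" "(transpose J ** G)$2$4 = G$1$4 + l1 * G$2$4"
    by (simp_all add: matrix_matrix_mult_def sum_4 J_def jordan_21_1_def transpose_def)
  have G24: "G$2$4 = 0" using eqs[of 2 4] e24 l12 G14 by (simp add: mult.commute)
  have e12: "(G ** J)$1$2 = G$1$1 + G$1$2 * l1" "(transpose J ** G)$1$2 = l1 * G$1$2"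
    by (simp_all add: matrix_matrix_mult_def sum_4 J_def jordan_21_1_def transpose_def)
  have G11: "G$1$1 = 0" using eqs[of 1 2] e12 by (simp add: mult.commute)
  have e23: "(G ** J)$2$3 = G$2$3 * l1" "(transpose J ** G)$2$3 = G$1$3 + l1 * G$2$3"
    by (simp_all add: matrix_matrix_mult_def sum_4 J_def jordan_21_1_def transpose_def)
  have G13: "G$1$3 = 0" using eqs[of 2 3] e23 by (simp add: mult.commute)
  define a where "a = G$1$2"
  define b where "b = G$2$2"
  define c where "c = G$2$3"
  define d where "d = G$3$3"
  define f where "f = G$4$4"
  have Gpat: "G = gpat a b c d f"
    unfolding mat4_eq forall_4 gpat_def a_def b_def c_def d_def f_def
    using G14 G34 G24 G11 G13 Gs[of 2 1] Gs[of 3 1] Gs[of 4 1] Gs[of 3 2] Gs[of 4 2] Gs[of 4 3]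
      Gs[of 3 1]
    by simp
  have invPt: "invertible (transpose P)" using invP by (simp add: invertible_det_nz det_transpose)
  have invG: "invertible G" unfolding G_def
    using invP invA invPt by (simp add: invertible_mult)
  have Gv: "G *v x = 0 \<Longrightarrow> x = 0" for x by (rule inv_ker[OF invG])
  have a0: "a \<noteq> 0"
  proof
    assume "a = 0"
    then have "G *v axis 1 1 = 0"
      by (simp add: Gpat gpat_def vec_eq_iff forall_4 matrix_vector_mult_def sum_4 axis_def)
    then show False using Gv[of "axis 1 1"] by (simp add: axis_eq_0_iff)
  qed
  have d0: "d \<noteq> 0"
  proof
    assume "d = 0"
    then have "G *v (vector [c, 0, -a, 0]) = 0"
      by (simp add: Gpat gpat_def vec_eq_iff forall_4 matrix_vector_mult_def sum_4)
    then have "(vector [c, 0, -a, 0] :: real^4) = 0" by (rule Gv)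
    then have "(vector [c, 0, -a, 0] :: real^4) $ 3 = 0" by simp
    then show False using a0 by simp
  qed
  have f0: "f \<noteq> 0"
  proof
    assume "f = 0"
    then have "G *v axis 4 1 = 0"
      by (simp add: Gpat gpat_def vec_eq_iff forall_4 matrix_vector_mult_def sum_4 axis_def)
    then show False using Gv[of "axis 4 1"] by (simp add: axis_eq_0_iff)
  qed
  obtain e where e: "sgnr e * a > 0" "(1 / sqrt \<bar>a\<bar>) * (1 / sqrt \<bar>a\<bar>) * a = sgnr e"
    using sgn_choice[OF a0] by blast
  obtain e2 where e2: "sgnr e2 * d > 0" "(1 / sqrt \<bar>d\<bar>) * (1 / sqrt \<bar>d\<bar>) * d = sgnr e2"
    using sgn_choice[OF d0] by blast
  obtain e3 where e3: "sgnr e3 * f > 0" "(1 / sqrt \<bar>f\<bar>) * (1 / sqrt \<bar>f\<bar>) * f = sgnr e3"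
    using sgn_choice[OF f0] by blast
  define \<alpha> where "\<alpha> = 1 / sqrt \<bar>a\<bar>"
  define \<epsilon> where "\<epsilon> = 1 / sqrt \<bar>d\<bar>"
  define \<zeta> where "\<zeta> = 1 / sqrt \<bar>f\<bar>"
  define \<beta> where "\<beta> = - \<alpha> * b / (2 * a)"
  define \<gamma> where "\<gamma> = - \<epsilon> * c / a"
  define R where "R = rpat \<alpha> \<beta> \<gamma> \<epsilon> \<zeta>"
  have nz: "\<alpha> \<noteq> 0" "\<epsilon> \<noteq> 0" "\<zeta> \<noteq> 0" using a0 d0 f0 by (auto simp: \<alpha>_def \<epsilon>_def \<zeta>_def)
  have invR: "invertible R" unfolding R_def using nz by (rule invertible_rpat)
  have c1: "\<alpha>*\<alpha>*b + 2*\<alpha>*\<beta>*a = 0" using a0 by (simp add: \<beta>_def field_simps)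
  have c2: "\<alpha>*\<gamma>*a + \<alpha>*\<epsilon>*c = 0" using a0 by (simp add: \<gamma>_def field_simps)
  have ea: "\<alpha>*\<alpha>*a = sgnr e" using e(2) by (simp add: \<alpha>_def)
  have ed: "\<epsilon>*\<epsilon>*d = sgnr e2" using e2(2) by (simp add: \<epsilon>_def)
  have ef: "\<zeta>*\<zeta>*f = sgnr e3" using e3(2) by (simp add: \<zeta>_def)
  define Q where "Q = P ** R"
  have QA: "transpose Q ** A ** Q = transpose R ** G ** R"
    by (simp add: Q_def G_def matrix_transpose_mul matrix_mul_assoc)
  have QB: "transpose Q ** B ** Q = transpose R ** (G ** J) ** R"
    by (simp add: Q_def H[symmetric] matrix_transpose_mul matrix_mul_assoc)
  have "transpose Q ** A ** Q = canA_21_1 (sgnr e) (sgnr e2) (sgnr e3)"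
    unfolding QA Gpat R_def rgr canA_gpat using c1 c2 ea ed ef by simp
  moreover have "transpose Q ** B ** Q = canB_21_1 (sgnr e) (sgnr e2) (sgnr e3) l1 l2"
  proof -
    have "transpose Q ** B ** Q =
      gpat (\<alpha>*\<alpha>*(a*l1)) (\<alpha>*\<alpha>*(a + b*l1) + 2*\<alpha>*\<beta>*(a*l1)) (\<alpha>*\<gamma>*(a*l1) + \<alpha>*\<epsilon>*(c*l1))
           (\<epsilon>*\<epsilon>*(d*l1)) (\<zeta>*\<zeta>*(f*l2))"
      unfolding QB Gpat J_def gpat_J R_def rgr ..
    also have "\<dots> = gpat (sgnr e * l1) (sgnr e) 0 (sgnr e2 * l1) (sgnr e3 * l2)"
    proof -
      have h1: "\<alpha>*\<alpha>*(a*l1) = sgnr e * l1" using ea by (simp add: algebra_simps)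
      have h2: "\<alpha>*\<alpha>*(a + b*l1) + 2*\<alpha>*\<beta>*(a*l1) = sgnr e"
      proof -
        have "\<alpha>*\<alpha>*(a + b*l1) + 2*\<alpha>*\<beta>*(a*l1) = \<alpha>*\<alpha>*a + l1 * (\<alpha>*\<alpha>*b + 2*\<alpha>*\<beta>*a)"
          by (simp add: algebra_simps)
        then show ?thesis using ea c1 by simp
      qed
      have h3: "\<alpha>*\<gamma>*(a*l1) + \<alpha>*\<epsilon>*(c*l1) = 0"
      proof -
        have "\<alpha>*\<gamma>*(a*l1) + \<alpha>*\<epsilon>*(c*l1) = l1 * (\<alpha>*\<gamma>*a + \<alpha>*\<epsilon>*c)" by (simp add: algebra_simps)
        then show ?thesis using c2 by simp
      qed
      have h4: "\<epsilon>*\<epsilon>*(d*l1) = sgnr e2 * l1" using ed by (simp add: algebra_simps)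
      have h5: "\<zeta>*\<zeta>*(f*l2) = sgnr e3 * l2" using ef by (simp add: algebra_simps)
      show ?thesis by (simp only: h1 h2 h3 h4 h5)
    qed
    finally show ?thesis by (simp add: canB_gpat)
  qed
  moreover have "invertible Q" unfolding Q_def by (rule invertible_mult[OF invP invR])
  moreover have "sgnr e2 * (transpose P ** A ** P) $ 3 $ 3 > 0" using e2(1) by (simp add: d_def G_def)
  moreover have "sgnr e3 * (transpose P ** A ** P) $ 4 $ 4 > 0" using e3(1) by (simp add: f_def G_def)
  ultimately show ?thesis by blast
qed


lemma matrix_add_rdistrib':
  fixes A :: "'a::semiring_1^'n^'m"
  shows "(A + B) ** C = A ** C + B ** C"
  by (simp add: matrix_matrix_mult_def vec_eq_iff sum.distrib distrib_right)

lemma pencil_lin: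
  fixes A B P :: "real^4^4"
  assumes BP: "B ** P = A ** P ** J"
  shows "(a *\<^sub>R A + b *\<^sub>R B) ** P = (A ** P) ** (a *\<^sub>R mat 1 + b *\<^sub>R J)"
proof -
  have "(a *\<^sub>R A + b *\<^sub>R B) ** P = a *\<^sub>R (A ** P) + b *\<^sub>R (B ** P)"
    by (simp add: matrix_add_rdistrib' matrix_scaleR_left)
  also have "\<dots> = (A ** P) ** (a *\<^sub>R mat 1 + b *\<^sub>R J)"
    by (simp add: BP matrix_add_ldistrib matrix_scaleR_right matrix_mul_assoc)
  finally show ?thesis .
qed

definition dgm :: "real \<Rightarrow> real^4^4" where
  "dgm k = vector [vector [1, 0, 0, 0], vector [0, k, 0, 0], vector [0, 0, 1, 0], vector [0, 0, 0, 1]]"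

lemma invertible_dgm: "k \<noteq> 0 \<Longrightarrow> invertible (dgm k)"
  unfolding invertible_def
  by (rule exI[of _ "dgm (1/k)"]) (simp add: mat4_eq forall_4 matrix_matrix_mult_def sum_4 dgm_def mat_def)

lemma pencil_transform:
  fixes A B P :: "real^4^4"
  assumes BP: "B ** P = A ** P ** jordan_21_1 l1 l2" and invP: "invertible P"
    and h1: "a + b * l1 \<noteq> 0" and h2: "a + b * l2 \<noteq> 0" and hd: "a * d - b * c \<noteq> 0"
  shows "\<exists>P'. invertible P' \<and>
     (c *\<^sub>R A + d *\<^sub>R B) ** P' = (a *\<^sub>R A + b *\<^sub>R B) ** P' **
        jordan_21_1 ((c + d * l1) / (a + b * l1)) ((c + d * l2) / (a + b * l2)) \<and>
     (transpose P' ** (a *\<^sub>R A + b *\<^sub>R B) ** P') $ 3 $ 3 = (a + b * l1) * (transpose P ** A ** P) $ 3 $ 3 \<and>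
     (transpose P' ** (a *\<^sub>R A + b *\<^sub>R B) ** P') $ 4 $ 4 = (a + b * l2) * (transpose P ** A ** P) $ 4 $ 4"
proof -
  define J where "J = jordan_21_1 l1 l2"
  define m1 where "m1 = (c + d * l1) / (a + b * l1)"
  define m2 where "m2 = (c + d * l2) / (a + b * l2)"
  define J' where "J' = jordan_21_1 m1 m2"
  have fm1: "(a + b * l1) * m1 = c + d * l1" using h1 by (simp add: m1_def)
  have fm2: "(a + b * l2) * m2 = c + d * l2" using h2 by (simp add: m2_def)
  define k where "k = (a + b * l1) * (a + b * l1) / (a * d - b * c)"
  have k0: "k \<noteq> 0" using h1 hd by (simp add: k_def)
  define P' where "P' = P ** dgm k"
  have invP': "invertible P'" unfolding P'_def by (rule invertible_mult[OF invP invertible_dgm[OF k0]])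
  have BP': "B ** P = A ** P ** J" using BP by (simp add: J_def)
  have key: "(c *\<^sub>R mat 1 + d *\<^sub>R J) ** dgm k = (a *\<^sub>R mat 1 + b *\<^sub>R J) ** dgm k ** J'"
  proof -
    have f1: "d * k - (a + b * l1) = b * (a + b * l1) * (c + d * l1) / (a * d - b * c)"
      unfolding k_def using hd by (simp add: field_simps)
    have f2: "b * k * ((c + d * l1) / (a + b * l1)) = b * (a + b * l1) * (c + d * l1) / (a * d - b * c)"
    proof -
      have gen: "\<And>u w D::real. u \<noteq> 0 \<Longrightarrow> b * (u * u / D) * (w / u) = b * u * w / D"
        by (simp add: field_simps)
      show ?thesis unfolding k_def using gen[OF h1] .
    qed
    have e12: "d * k = (a + b * l1) + b * k * m1"
      using f1 f2 by (simp add: m1_def)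
    have fk: "c * k + d * (k * l1) = a * (k * m1) + b * (k * (l1 * m1))"
    proof -
      have "c * k + d * (k * l1) = (c + d * l1) * k" by (simp add: algebra_simps)
      also have "\<dots> = (a + b * l1) * m1 * k" using fm1 by simp
      finally show ?thesis by (simp add: algebra_simps)
    qed
    show ?thesis
      unfolding mat4_eq forall_4
      by (simp add: matrix_matrix_mult_def sum_4 dgm_def mat_def J_def J'_def jordan_21_1_def
          algebra_simps fm1[symmetric] fm2[symmetric] e12 fk)
  qed
  have eq: "(c *\<^sub>R A + d *\<^sub>R B) ** P' = (a *\<^sub>R A + b *\<^sub>R B) ** P' ** J'"
  proof -
    have "(c *\<^sub>R A + d *\<^sub>R B) ** P' = ((c *\<^sub>R A + d *\<^sub>R B) ** P) ** dgm k"
      by (simp only: P'_def matrix_mul_assoc)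
    also have "\<dots> = ((A ** P) ** (c *\<^sub>R mat 1 + d *\<^sub>R J)) ** dgm k"
      by (simp only: pencil_lin[OF BP'])
    also have "\<dots> = (A ** P) ** ((c *\<^sub>R mat 1 + d *\<^sub>R J) ** dgm k)"
      by (simp only: matrix_mul_assoc)
    also have "\<dots> = (A ** P) ** ((a *\<^sub>R mat 1 + b *\<^sub>R J) ** dgm k ** J')" using key by simp
    also have "\<dots> = (((A ** P) ** (a *\<^sub>R mat 1 + b *\<^sub>R J)) ** dgm k) ** J'"
      by (simp only: matrix_mul_assoc)
    also have "\<dots> = (((a *\<^sub>R A + b *\<^sub>R B) ** P) ** dgm k) ** J'"
      by (simp only: pencil_lin[OF BP'])
    also have "\<dots> = (a *\<^sub>R A + b *\<^sub>R B) ** P' ** J'"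
      by (simp only: P'_def matrix_mul_assoc)
    finally show ?thesis .
  qed
  define G where "G = transpose P ** A ** P"
  have gram: "transpose P' ** (a *\<^sub>R A + b *\<^sub>R B) ** P' =
      transpose (dgm k) ** (G ** (a *\<^sub>R mat 1 + b *\<^sub>R J)) ** dgm k"
  proof -
    have "transpose P' ** (a *\<^sub>R A + b *\<^sub>R B) ** P' =
        transpose (dgm k) ** (transpose P ** ((a *\<^sub>R A + b *\<^sub>R B) ** P)) ** dgm k"
      unfolding P'_def by (simp add: matrix_transpose_mul matrix_mul_assoc)
    also have "\<dots> = transpose (dgm k) ** (G ** (a *\<^sub>R mat 1 + b *\<^sub>R J)) ** dgm k"
      unfolding pencil_lin[OF BP'] G_def by (simp add: matrix_mul_assoc)
    finally show ?thesis .
  qed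
  have g33: "(transpose P' ** (a *\<^sub>R A + b *\<^sub>R B) ** P') $ 3 $ 3 = (a + b * l1) * G $ 3 $ 3"
    unfolding gram
    by (simp add: matrix_matrix_mult_def sum_4 dgm_def mat_def J_def jordan_21_1_def transpose_def
        algebra_simps)
  have g44: "(transpose P' ** (a *\<^sub>R A + b *\<^sub>R B) ** P') $ 4 $ 4 = (a + b * l2) * G $ 4 $ 4"
    unfolding gram
    by (simp add: matrix_matrix_mult_def sum_4 dgm_def mat_def J_def jordan_21_1_def transpose_def
        algebra_simps)
  show ?thesis using invP' eq g33 g44 unfolding J'_def G_def m1_def m2_def by blast
qed

definition tmat :: "real \<Rightarrow> real^4^4" where
  "tmat \<delta> = vector [vector [\<delta>, 0, 0, 0], vector [-\<delta>, 1, 0, 0], vector [0, 0, 1, 0], vector [0, 0, 0, 1]]"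

lemma invertible_tmat: "\<delta> \<noteq> 0 \<Longrightarrow> invertible (tmat \<delta>)"
  unfolding invertible_def
  by (rule exI[of _ "vector [vector [1/\<delta>, 0, 0, 0], vector [1, 1, 0, 0], vector [0, 0, 1, 0], vector [0, 0, 0, 1]]"])
     (simp add: mat4_eq forall_4 matrix_matrix_mult_def sum_4 tmat_def mat_def)

lemma Id_canon:
  fixes A B Q :: "real^4^4"
  assumes symA: "transpose A = A" and symB: "transpose B = B" and invQ: "invertible Q"
    and QA: "transpose Q ** A ** Q = canA_21_1 (sgnr e) (sgnr e2) (sgnr e3)"
    and QB: "transpose Q ** B ** Q = canB_21_1 (sgnr e) (sgnr e2) (sgnr e3) l1 l2"
    and x1: "x \<noteq> l1"
  shows "Id_pencil A B x = 1 + (if sgnr e2 * (x - l1) > 0 then 1 else 0)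
                             + (if sgnr e3 * (x - l2) > 0 then 1 else 0)"
proof -
  define s where "s = sgnr e"
  define dd :: "4 \<Rightarrow> real" where "dd = (\<lambda>i. if i = 1 then s else if i = 2 then - s
      else if i = 3 then sgnr e2 * (x - l1) else sgnr e3 * (x - l2))"
  define M where "M = x *\<^sub>R A - B"
  have symM: "transpose M = M" unfolding M_def using symA symB
    by (simp add: vec_eq_iff transpose_def)
  have QM: "transpose Q ** M ** Q = x *\<^sub>R canA_21_1 s (sgnr e2) (sgnr e3) - canB_21_1 s (sgnr e2) (sgnr e3) l1 l2"
    unfolding M_def s_def QA[symmetric] QB[symmetric]
    by (simp add: matrix_sub_ldistrib matrix_sub_rdistrib matrix_scaleR_left matrix_scaleR_right)
  have C: "x *\<^sub>R canA_21_1 s (sgnr e2) (sgnr e3) - canB_21_1 s (sgnr e2) (sgnr e3) l1 l2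
        = transpose (tmat (x - l1)) ** diagm dd ** tmat (x - l1)"
    unfolding mat4_eq forall_4
    by (simp add: matrix_matrix_mult_def sum_4 tmat_def diagm_def dd_def transpose_def
        canA_21_1_def canB_21_1_def algebra_simps)
  define Qi where "Qi = matrix_inv Q"
  have QQi: "Q ** Qi = mat 1" using matrix_inv_props[OF invQ] by (simp add: Qi_def)
  have invQi: "invertible Qi" using matrix_inv_props[OF invQ] unfolding Qi_def invertible_def by blast
  have "M = transpose Qi ** (transpose Q ** M ** Q) ** Qi"
  proof -
    have "transpose Qi ** (transpose Q ** M ** Q) ** Qi = transpose (Q ** Qi) ** M ** (Q ** Qi)"
      by (simp add: matrix_transpose_mul matrix_mul_assoc)
    then show ?thesis using QQi by (simp add: transpose_mat)
  qed
  also have "\<dots> = transpose (tmat (x - l1) ** Qi) ** diagm dd ** (tmat (x - l1) ** Qi)"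
    unfolding QM C by (simp add: matrix_transpose_mul matrix_mul_assoc)
  finally have Meq: "M = transpose (tmat (x - l1) ** Qi) ** diagm dd ** (tmat (x - l1) ** Qi)" .
  have invS: "invertible (tmat (x - l1) ** Qi)"
    using x1 invQi by (intro invertible_mult invertible_tmat) auto
  have "Id_pencil A B x = card {i. dd i > 0}"
    unfolding Id_pencil_def M_def[symmetric] by (rule sylvester[OF symM invS Meq])
  also have "\<dots> = 1 + (if sgnr e2 * (x - l1) > 0 then 1 else 0)
                             + (if sgnr e3 * (x - l2) > 0 then 1 else 0)"
    unfolding card4 by (cases e) (simp_all add: dd_def s_def sgnr_def)
  finally show ?thesis .
qed


definition dotp :: "complex^4 \<Rightarrow> complex^4 \<Rightarrow> complex" where
  "dotp u v = (\<Sum>i\<in>UNIV. u$i * v$i)"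

lemma dotp_comm: "dotp u v = dotp v u"
  by (simp add: dotp_def mult.commute)

lemma cbil_dotp: "cbil S X Y = dotp X (S *v Y)"
  by (simp add: cbil_def dotp_def matrix_vector_mult_def sum_distrib_left mult.assoc)

lemma dotp_transpose: "dotp X (transpose M *v w) = dotp (M *v X) w"
proof -
  have "dotp X (transpose M *v w) = (\<Sum>i\<in>UNIV. \<Sum>j\<in>UNIV. X$i * M$j$i * w$j)"
    by (simp add: dotp_def matrix_vector_mult_def transpose_def sum_distrib_left mult.assoc
        del: transpose_matrix_vector)
  also have "\<dots> = (\<Sum>j\<in>UNIV. \<Sum>i\<in>UNIV. X$i * M$j$i * w$j)" by (rule sum.swap)
  also have "\<dots> = (\<Sum>j\<in>UNIV. (\<Sum>i\<in>UNIV. M$j$i * X$i) * w$j)"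
    by (simp add: sum_distrib_left sum_distrib_right ac_simps)
  also have "\<dots> = dotp (M *v X) w"
    by (simp add: dotp_def matrix_vector_mult_def)
  finally show ?thesis .
qed

lemma cbil_congr: "cbil (transpose M ** S ** M) X Z = cbil S (M *v X) (M *v Z)"
  by (simp add: cbil_dotp matrix_vector_mul_assoc[symmetric] dotp_transpose del: transpose_matrix_vector)

lemma clin_transpose: "clin (transpose M *v u) X = clin u (M *v X)"
  unfolding clin_def dotp_def[symmetric] by (simp add: dotp_comm dotp_transpose del: transpose_matrix_vector)

lemma cmat_mult: "cmat (A ** B) = cmat A ** cmat B"
  by (simp add: cmat_def matrix_matrix_mult_def vec_eq_iff)

lemma cmat_transpose: "cmat (transpose A) = transpose (cmat A)"
  by (simp add: cmat_def transpose_def vec_eq_iff)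

lemma cmat_one: "cmat (mat 1) = mat 1"
  by (simp add: cmat_def mat_def vec_eq_iff)

lemma ppoint_scale:
  assumes c: "c \<noteq> 0"
  shows "ppoint (c *s X) = ppoint X"
  unfolding ppoint_def
proof (rule set_eqI, rule iffI)
  fix Y assume "Y \<in> {c' *s (c *s X) | c'. c' \<noteq> 0}"
  then obtain c' where Y: "Y = c' *s (c *s X)" "c' \<noteq> 0" by blast
  show "Y \<in> {c' *s X | c'. c' \<noteq> 0}"
    using Y c by (intro CollectI exI[of _ "c' * c"]) (simp add: vector_smult_assoc)
next
  fix Y assume "Y \<in> {c' *s X | c'. c' \<noteq> 0}"
  then obtain c' where Y: "Y = c' *s X" "c' \<noteq> 0" by blast
  have "c' *s X = (c' / c) *s (c *s X)" using c by (simp add: vector_smult_assoc)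
  then show "Y \<in> {c' *s (c *s X) | c'. c' \<noteq> 0}"
    using Y c by (intro CollectI exI[of _ "c' / c"]) simp
qed

lemma ppoint_self: "X \<in> ppoint X"
  unfolding ppoint_def by (auto intro: exI[of _ 1])

lemma real_vec_cmat: "real_vec X \<Longrightarrow> real_vec (cmat M *v X)"
  by (simp add: real_vec_def cmat_def matrix_vector_mult_def Im_sum)

lemma cbil_canA: "cbil (cmat (canA_21_1 s 1 1)) W Z =
    of_real s * (W$1 * Z$2 + W$2 * Z$1) + W$3 * Z$3 + W$4 * Z$4"
  by (simp add: cbil_def sum_4 cmat_def canA_21_1_def algebra_simps)

lemma cbil_canB: "cbil (cmat (canB_21_1 s 1 1 l1 l2)) W Z =
    of_real (s * l1) * (W$1 * Z$2 + W$2 * Z$1) + of_real s * W$2 * Z$2 + of_real l1 * W$3 * Z$3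
    + of_real l2 * W$4 * Z$4"
  by (simp add: cbil_def sum_4 cmat_def canB_21_1_def algebra_simps)

lemma clin4: "clin u X = u$1 * X$1 + u$2 * X$2 + u$3 * X$3 + u$4 * X$4"
  by (simp add: clin_def sum_4)


lemma geo:
  fixes A B Q :: "real^4^4" and s l1 l2 :: real
  assumes symA: "transpose A = A" and invQ: "invertible Q"
    and QA: "transpose Q ** A ** Q = canA_21_1 s 1 1"
    and QB: "transpose Q ** B ** Q = canB_21_1 s 1 1 l1 l2"
    and s: "s = 1 \<or> s = -1" and l12: "l1 < l2"
  shows "\<exists>C1 C2. QSIC_two_conics A B C1 C2 \<and> tangent_at_one_real_point C1 C2 \<and>
     (s = -1 \<longrightarrow> real_conic C1 \<and> real_conic C2) \<and>
     (s = 1 \<longrightarrow> imaginary_conic C1 \<and> imaginary_conic C2)"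
proof -
  define Qi where "Qi = matrix_inv Q"
  have QQi: "Q ** Qi = mat 1" "Qi ** Q = mat 1" using matrix_inv_props[OF invQ] by (auto simp: Qi_def)
  define N where "N = cmat Q"
  define Ni where "Ni = cmat Qi"
  have NNi: "N ** Ni = mat 1" "Ni ** N = mat 1"
    using QQi by (simp_all add: N_def Ni_def cmat_mult[symmetric] cmat_one)
  have NiN_v: "Ni *v (N *v Y) = Y" for Y using NNi by (simp add: matrix_vector_mul_assoc)
  have NNi_v: "N *v (Ni *v X) = X" for X using NNi by (simp add: matrix_vector_mul_assoc)
  have backQ: "(M::real^4^4) = transpose Qi ** (transpose Q ** M ** Q) ** Qi" for M
  proof -
    have "transpose Qi ** (transpose Q ** M ** Q) ** Qi = transpose (Q ** Qi) ** M ** (Q ** Qi)"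
      by (simp add: matrix_transpose_mul matrix_mul_assoc)
    then show ?thesis using QQi by (simp add: transpose_mat)
  qed
  have cA: "cmat A = transpose Ni ** cmat (canA_21_1 s 1 1) ** Ni"
    using backQ[of A] unfolding QA by (metis Ni_def cmat_mult cmat_transpose)
  have cB: "cmat B = transpose Ni ** cmat (canB_21_1 s 1 1 l1 l2) ** Ni"
    using backQ[of B] unfolding QB by (metis Ni_def cmat_mult cmat_transpose)
  have FA: "cbil (cmat A) X Z = cbil (cmat (canA_21_1 s 1 1)) (Ni *v X) (Ni *v Z)" for X Z
    unfolding cA by (rule cbil_congr)
  have FB: "cbil (cmat B) X Z = cbil (cmat (canB_21_1 s 1 1 l1 l2)) (Ni *v X) (Ni *v Z)" for X Z
    unfolding cB by (rule cbil_congr)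
  define r where "r = sqrt (l2 - l1)"
  have r: "r > 0" "r * r = l2 - l1" using l12 by (auto simp: r_def)
  define k :: complex where "k = (if s = -1 then of_real r else \<i> * of_real r)"
  have k0: "k \<noteq> 0" using r by (auto simp: k_def)
  have sk: "of_real s * k * k = - of_real (l2 - l1)"
  proof (cases "s = -1")
    case True
    then have "of_real s * k * k = - of_real (r * r)" by (simp add: k_def)
    then show ?thesis using r by simp
  next
    case False
    then have s1: "s = 1" using s by auto
    have "of_real s * k * k = \<i> * \<i> * of_real (r * r)" using s1 by (simp add: k_def algebra_simps)
    then show ?thesis using r by simp
  qed
  have ss: "of_real s * of_real s = (1::complex)" using s by (auto)
  have s0: "(of_real s :: complex) \<noteq> 0" using s by auto
  define uY where "uY = (\<lambda>\<sigma>::complex. vector [0, 1, 0, - \<sigma> * k] :: complex^4)"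
  define u where "u = (\<lambda>\<sigma>. transpose Ni *v uY \<sigma>)"
  define C where "C = (\<lambda>\<sigma>. {X. X \<noteq> 0 \<and> clin (u \<sigma>) X = 0 \<and> cbil (cmat A) X X = 0})"
  have lin: "clin (u \<sigma>) X = (Ni *v X)$2 - \<sigma> * k * (Ni *v X)$4" for \<sigma> X
    unfolding u_def clin_transpose by (simp add: clin4 uY_def)
  have fa: "cbil (cmat A) X X = of_real s * (2 * (Ni *v X)$1 * (Ni *v X)$2) + (Ni *v X)$3 * (Ni *v X)$3
      + (Ni *v X)$4 * (Ni *v X)$4" for X
    unfolding FA cbil_canA by (simp add: algebra_simps)
  have fb: "cbil (cmat B) X X = of_real l1 * cbil (cmat A) X X +
      of_real s * ((Ni *v X)$2 - k * (Ni *v X)$4) * ((Ni *v X)$2 + k * (Ni *v X)$4)" for X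
  proof -
    have "of_real s * ((Ni *v X)$2 - k * (Ni *v X)$4) * ((Ni *v X)$2 + k * (Ni *v X)$4)
       = of_real s * (Ni *v X)$2 * (Ni *v X)$2 - (of_real s * k * k) * (Ni *v X)$4 * (Ni *v X)$4"
      by (simp add: algebra_simps)
    also have "\<dots> = of_real s * (Ni *v X)$2 * (Ni *v X)$2 + of_real (l2 - l1) * (Ni *v X)$4 * (Ni *v X)$4"
      unfolding sk by (simp add: algebra_simps)
    finally have e: "of_real s * ((Ni *v X)$2 - k * (Ni *v X)$4) * ((Ni *v X)$2 + k * (Ni *v X)$4)
       = of_real s * (Ni *v X)$2 * (Ni *v X)$2 + of_real (l2 - l1) * (Ni *v X)$4 * (Ni *v X)$4" .
    show ?thesis unfolding e FB cbil_canB FA cbil_canA by (simp add: algebra_simps)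
  qed
  have X0: "X = 0 \<longleftrightarrow> Ni *v X = 0" for X by (metis NNi_v matrix_vector_mult_0_right)
  have qsic: "QSIC A B = C 1 \<union> C (-1)"
  proof (rule set_eqI)
    fix X
    have "X \<in> QSIC A B \<longleftrightarrow> X \<noteq> 0 \<and> cbil (cmat A) X X = 0 \<and>
       of_real s * ((Ni *v X)$2 - k * (Ni *v X)$4) * ((Ni *v X)$2 + k * (Ni *v X)$4) = 0"
      unfolding QSIC_def using fb[of X] by auto
    also have "\<dots> \<longleftrightarrow> X \<in> C 1 \<union> C (-1)"
      using s0 unfolding C_def lin by auto
    finally show "X \<in> QSIC A B \<longleftrightarrow> X \<in> C 1 \<union> C (-1)" .
  qed
  have rep: "conic_rep (C \<sigma>) (u \<sigma>) (cmat A)" if sg: "\<sigma> \<noteq> 0" for \<sigma>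
  proof -
    have "u \<sigma> \<noteq> 0"
    proof
      assume "u \<sigma> = 0"
      then have "transpose N *v (transpose Ni *v uY \<sigma>) = 0" by (simp add: u_def)
      moreover have "transpose N ** transpose Ni = mat 1"
        using NNi by (simp add: matrix_transpose_mul[symmetric] transpose_mat)
      ultimately have "uY \<sigma> = 0" by (simp add: matrix_vector_mul_assoc del: transpose_matrix_vector)
      then have "uY \<sigma> $ 2 = 0" by simp
      then show False by (simp add: uY_def)
    qed
    moreover have "transpose (cmat A) = cmat A" using symA by (simp add: cmat_transpose[symmetric])
    moreover have "\<forall>V. clin (u \<sigma>) V = 0 \<and> (\<forall>Z. clin (u \<sigma>) Z = 0 \<longrightarrow> cbil (cmat A) V Z = 0) \<longrightarrow> V = 0"
    proof (intro allI impI, elim conjE)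
      fix V assume lV: "clin (u \<sigma>) V = 0" and hV: "\<forall>Z. clin (u \<sigma>) Z = 0 \<longrightarrow> cbil (cmat A) V Z = 0"
      define W where "W = Ni *v V"
      have hW: "cbil (cmat (canA_21_1 s 1 1)) W Z' = 0" if "Z'$2 - \<sigma> * k * Z'$4 = 0" for Z'
      proof -
        have "clin (u \<sigma>) (N *v Z') = 0" using that by (simp add: lin NiN_v)
        then have "cbil (cmat A) V (N *v Z') = 0" using hV by blast
        then show ?thesis by (simp add: FA NiN_v W_def)
      qed
      have "cbil (cmat (canA_21_1 s 1 1)) W (axis 1 1) = 0" by (rule hW) (simp add: axis_def)
      then have W2: "W$2 = 0" using s0 by (simp add: cbil_canA axis_def)
      have "W$2 - \<sigma> * k * W$4 = 0" using lV by (simp add: lin W_def)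
      then have W4: "W$4 = 0" using W2 sg k0 by simp
      have "cbil (cmat (canA_21_1 s 1 1)) W (axis 3 1) = 0" by (rule hW) (simp add: axis_def)
      then have W3: "W$3 = 0" by (simp add: cbil_canA axis_def)
      have "cbil (cmat (canA_21_1 s 1 1)) W (vector [0, \<sigma> * k, 0, 1]) = 0" by (rule hW) simp
      then have "of_real s * (W$1 * (\<sigma> * k)) = 0" using W2 W3 W4 by (simp add: cbil_canA)
      then have W1: "W$1 = 0" using s0 sg k0 by simp
      have "W = 0" using W1 W2 W3 W4 by (simp add: vec_eq_iff forall_4)
      then show "V = 0" using X0 W_def by simp
    qed
    ultimately show ?thesis unfolding conic_rep_def C_def by blast
  qed
  have isc: "is_conic (C \<sigma>)" if "\<sigma> \<noteq> 0" for \<sigma> using rep[OF that] unfolding is_conic_def by blast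
  have dist: "C 1 \<noteq> C (-1)"
  proof -
    define Ys :: "complex^4" where "Ys = vector [- of_real s / (2 * k), k, 0, 1]"
    define Xs where "Xs = N *v Ys"
    have NiX: "Ni *v Xs = Ys" by (simp add: Xs_def NiN_v)
    have "Xs \<noteq> 0" using X0[of Xs] NiX by (auto simp: Ys_def vec_eq_iff forall_4)
    moreover have "clin (u 1) Xs = 0" by (simp add: lin NiX Ys_def)
    moreover have "cbil (cmat A) Xs Xs = 0"
    proof -
      have "of_real s * (2 * (- of_real s / (2 * k)) * k) = - (of_real s * of_real s)"
        using k0 by (simp add: field_simps)
      then show ?thesis unfolding fa NiX using ss by (simp add: Ys_def)
    qed
    moreover have "clin (u (-1)) Xs \<noteq> 0" using k0 by (simp add: lin NiX Ys_def)
    ultimately have "Xs \<in> C 1" "Xs \<notin> C (-1)" by (auto simp: C_def)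
    then show ?thesis by blast
  qed
  define P0 where "P0 = N *v axis 1 1"
  have NiP0: "Ni *v P0 = axis 1 1" by (simp add: P0_def NiN_v)
  have realP0: "real_vec P0" unfolding P0_def N_def
    by (rule real_vec_cmat) (simp add: real_vec_def axis_def)
  have P0C: "P0 \<in> C \<sigma>" for \<sigma>
  proof -
    have "P0 \<noteq> 0" using X0[of P0] NiP0 by (simp add: axis_eq_0_iff)
    then show ?thesis unfolding C_def by (simp add: lin fa NiP0 axis_def)
  qed
  have scale_P0: "ppoint X = ppoint P0" if "X \<noteq> 0" "(Ni *v X)$2 = 0" "(Ni *v X)$3 = 0" "(Ni *v X)$4 = 0" for X
  proof -
    define c where "c = (Ni *v X)$1"
    have "Ni *v X = c *s axis 1 1" using that by (simp add: vec_eq_iff forall_4 c_def axis_def)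
    then have "X = c *s P0" by (metis NNi_v P0_def vector_scalar_commute)
    moreover have "c \<noteq> 0" using that(1) \<open>X = c *s P0\<close> by auto
    ultimately show ?thesis by (simp add: ppoint_scale)
  qed
  have inter: "ppoint ` (C 1 \<inter> C (-1)) = {ppoint P0}"
  proof -
    have "ppoint X = ppoint P0" if "X \<in> C 1" "X \<in> C (-1)" for X
    proof -
      have h: "(Ni *v X)$2 - k * (Ni *v X)$4 = 0" "(Ni *v X)$2 + k * (Ni *v X)$4 = 0"
        "X \<noteq> 0" "cbil (cmat A) X X = 0"
        using that by (auto simp: C_def lin)
      then have "2 * k * (Ni *v X)$4 = 0" by (simp add: algebra_simps)
      then have h4: "(Ni *v X)$4 = 0" using k0 by simp
      then have h2: "(Ni *v X)$2 = 0" using h(1) by simp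
      have "(Ni *v X)$3 * (Ni *v X)$3 = 0" using h(4) h2 h4 by (simp add: fa)
      then have h3: "(Ni *v X)$3 = 0" by simp
      show ?thesis by (rule scale_P0[OF h(3) h2 h3 h4])
    qed
    moreover have "P0 \<in> C 1 \<inter> C (-1)" using P0C by auto
    ultimately show ?thesis by blast
  qed
  have tang: "tangent_at (C 1) (C (-1)) P0"
  proof -
    have cb: "cbil (cmat A) P0 Z = of_real s * (Ni *v Z)$2" for Z
      by (simp add: FA NiP0 cbil_canA axis_def)
    have "{Z. clin (u 1) Z = 0 \<and> cbil (cmat A) P0 Z = 0} = {Z. clin (u (-1)) Z = 0 \<and> cbil (cmat A) P0 Z = 0}"
      using s0 k0 by (auto simp: cb lin)
    then show ?thesis unfolding tangent_at_def using P0C rep[of 1] rep[of "-1"] by auto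
  qed
  have tone: "tangent_at_one_real_point (C 1) (C (-1))"
    unfolding tangent_at_one_real_point_def using realP0 P0C inter tang by blast
  have realc: "real_conic (C (of_real \<sigma>))" if sm: "s = -1" and sg: "\<sigma> = 1 \<or> \<sigma> = -1" for \<sigma> :: real
  proof -
    define Yt :: "real \<Rightarrow> complex^4" where
      "Yt = (\<lambda>t. vector [of_real (\<sigma> * (t*t + 1) / (2 * r)), of_real (\<sigma> * r), of_real t, 1])"
    define Xt where "Xt = (\<lambda>t. N *v Yt t)"
    have NiXt: "Ni *v Xt t = Yt t" for t by (simp add: Xt_def NiN_v)
    have kr: "k = of_real r" using sm by (simp add: k_def)
    have XtC: "Xt t \<in> C (of_real \<sigma>)" for t
    proof -
      have "Xt t \<noteq> 0" using X0[of "Xt t"] NiXt[of t] by (auto simp: Yt_def vec_eq_iff forall_4)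
      moreover have "clin (u (of_real \<sigma>)) (Xt t) = 0" by (simp add: lin NiXt Yt_def kr)
      moreover have "cbil (cmat A) (Xt t) (Xt t) = 0"
      proof -
        have s2: "\<sigma> * \<sigma> = 1" using sg by auto
        have "2 * (\<sigma> * (t * t + 1) / (2 * r)) * (\<sigma> * r) = (\<sigma> * \<sigma>) * (t * t + 1)"
          using r(1) by (simp add: field_simps)
        then have "- (2 * (\<sigma> * (t * t + 1) / (2 * r)) * (\<sigma> * r)) + t * t + 1 = 0"
          using s2 by simp
        moreover have "cbil (cmat A) (Xt t) (Xt t) =
            complex_of_real (s * (2 * (\<sigma> * (t * t + 1) / (2 * r)) * (\<sigma> * r)) + t * t + 1)"
          unfolding fa NiXt by (simp add: Yt_def)
        ultimately show ?thesis using sm by simp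
      qed
      ultimately show ?thesis by (simp add: C_def)
    qed
    have realXt: "real_vec (Xt t)" for t unfolding Xt_def N_def
      by (rule real_vec_cmat) (simp add: real_vec_def Yt_def forall_4)
    have inj: "inj (\<lambda>t. ppoint (Xt t))"
    proof (rule injI)
      fix t t' assume "ppoint (Xt t) = ppoint (Xt t')"
      then have "Xt t \<in> ppoint (Xt t')" using ppoint_self by metis
      then obtain c where c: "Xt t = c *s Xt t'" by (auto simp: ppoint_def)
      then have "Yt t = c *s Yt t'" by (metis NiXt vector_scalar_commute)
      then have "(Yt t)$4 = c * (Yt t')$4" "(Yt t)$3 = c * (Yt t')$3" by simp_all
      then show "t = t'" by (simp add: Yt_def)
    qed
    have "range (\<lambda>t. ppoint (Xt t)) \<subseteq> real_points (C (of_real \<sigma>))"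
      unfolding real_points_def using XtC realXt by auto
    moreover have "infinite (range (\<lambda>t. ppoint (Xt t)))"
    proof
      assume "finite (range (\<lambda>t. ppoint (Xt t)))"
      then have "finite (UNIV :: real set)" using finite_imageD inj by blast
      then show False using infinite_UNIV_char_0 by blast
    qed
    ultimately have "infinite (real_points (C (of_real \<sigma>)))" using finite_subset by blast
    moreover have "is_conic (C (of_real \<sigma>))" using sg by (intro isc) auto
    ultimately show ?thesis unfolding real_conic_def by blast
  qed
  have imagc: "imaginary_conic (C (of_real \<sigma>))" if sm: "s = 1" and sg: "\<sigma> = 1 \<or> \<sigma> = -1" for \<sigma> :: real
  proof -
    have kr: "k = \<i> * of_real r" using sm by (simp add: k_def)
    have "real_points (C (of_real \<sigma>)) \<subseteq> {ppoint P0}"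
    proof
      fix p assume "p \<in> real_points (C (of_real \<sigma>))"
      then obtain X where X: "X \<in> C (of_real \<sigma>)" "real_vec X" and p: "p = ppoint X"
        by (auto simp: real_points_def)
      define W where "W = Ni *v X"
      have rW: "real_vec W" unfolding W_def Ni_def by (rule real_vec_cmat[OF X(2)])
      have h: "W$2 - of_real \<sigma> * k * W$4 = 0" "X \<noteq> 0" "cbil (cmat A) X X = 0"
        using X(1) by (auto simp: C_def lin W_def)
      have "Im (W$2 - of_real \<sigma> * k * W$4) = 0" using h(1) by simp
      then have "\<sigma> * r * Re (W$4) = 0" using rW by (simp add: real_vec_def kr)
      then have "Re (W$4) = 0" using sg r(1) by auto
      then have W4: "W$4 = 0" using rW by (simp add: real_vec_def complex_eq_iff)
      then have W2: "W$2 = 0" using h(1) by simp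
      have "W$3 * W$3 = 0" using h(3) W2 W4 by (simp add: fa W_def)
      then have W3: "W$3 = 0" by simp
      have "ppoint X = ppoint P0" using scale_P0[OF h(2)] W2 W3 W4 by (simp add: W_def)
      then show "p \<in> {ppoint P0}" using p by simp
    qed
    then have "finite (real_points (C (of_real \<sigma>)))" using finite_subset by blast
    moreover have "is_conic (C (of_real \<sigma>))" using sg by (intro isc) auto
    ultimately show ?thesis unfolding imaginary_conic_def by blast
  qed
  have two: "QSIC_two_conics A B (C 1) (C (-1))"
    unfolding QSIC_two_conics_def using isc[of 1] isc[of "-1"] dist qsic by simp
  have r1: "s = -1 \<longrightarrow> real_conic (C 1) \<and> real_conic (C (-1))"
    using realc[of 1] realc[of "-1"] by simp
  have i1: "s = 1 \<longrightarrow> imaginary_conic (C 1) \<and> imaginary_conic (C (-1))"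
    using imagc[of 1] imagc[of "-1"] by simp
  show ?thesis using two tone r1 i1 by blast
qed


lemma cbil_lin: "cbil (cmat (a *\<^sub>R A + b *\<^sub>R B)) X X =
   of_real a * cbil (cmat A) X X + of_real b * cbil (cmat B) X X"
  by (simp add: cbil_def cmat_def sum.distrib sum_distrib_left algebra_simps)

lemma QSIC_pencil:
  assumes "a * d - b * c \<noteq> 0"
  shows "QSIC (a *\<^sub>R A + b *\<^sub>R B) (c *\<^sub>R A + d *\<^sub>R B) = QSIC A B"
proof (rule set_eqI)
  fix X
  let ?a = "cbil (cmat A) X X" and ?b = "cbil (cmat B) X X"
  have D: "complex_of_real a * of_real d - of_real b * of_real c \<noteq> 0"
  proof
    assume "complex_of_real a * of_real d - of_real b * of_real c = 0"
    then have "complex_of_real (a * d - b * c) = 0" by simp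
    then show False using assms by (simp only: of_real_eq_0_iff)
  qed
  have "(of_real a * ?a + of_real b * ?b = 0 \<and> of_real c * ?a + of_real d * ?b = 0) \<longleftrightarrow> (?a = 0 \<and> ?b = 0)"
  proof
    assume h: "of_real a * ?a + of_real b * ?b = 0 \<and> of_real c * ?a + of_real d * ?b = 0"
    have "(complex_of_real a * of_real d - of_real b * of_real c) * ?a =
        of_real d * (of_real a * ?a + of_real b * ?b) - of_real b * (of_real c * ?a + of_real d * ?b)"
      by (simp add: algebra_simps)
    then have "?a = 0" using h D by simp
    moreover have "(complex_of_real a * of_real d - of_real b * of_real c) * ?b =
        of_real a * (of_real c * ?a + of_real d * ?b) - of_real c * (of_real a * ?a + of_real b * ?b)"
      by (simp add: algebra_simps)
    then have "?b = 0" using h D by simp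
    ultimately show "?a = 0 \<and> ?b = 0" by simp
  qed simp
  then show "X \<in> QSIC (a *\<^sub>R A + b *\<^sub>R B) (c *\<^sub>R A + d *\<^sub>R B) \<longleftrightarrow> X \<in> QSIC A B"
    unfolding QSIC_def by (simp add: cbil_lin)
qed

lemma sym_comb:
  fixes A B :: "real^4^4"
  assumes "transpose A = A" "transpose B = B"
  shows "transpose (a *\<^sub>R A + b *\<^sub>R B) = a *\<^sub>R A + b *\<^sub>R B"
proof -
  have "transpose (a *\<^sub>R A + b *\<^sub>R B) = a *\<^sub>R transpose A + b *\<^sub>R transpose B"
    by (simp add: transpose_def vec_eq_iff)
  then show ?thesis using assms by simp
qed

lemma sgnr_pos: "sgnr e * x > 0 \<Longrightarrow> x > 0 \<Longrightarrow> e = Pos"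
  by (cases e) (auto simp: sgnr_def)

lemma Id_from_seq:
  fixes A B Q :: "real^4^4"
  assumes symA: "transpose A = A" and symB: "transpose B = B" and invQ: "invertible Q"
    and QA: "transpose Q ** A ** Q = canA_21_1 (sgnr e) (sgnr e2) (sgnr e3)"
    and QB: "transpose Q ** B ** Q = canB_21_1 (sgnr e) (sgnr e2) (sgnr e3) l1 l2"
    and l12: "l1 < l2" and Id3: "Id_pencil A B (l2 + 1) = 3"
  shows "e2 = Pos \<and> e3 = Pos"
proof -
  have "Id_pencil A B (l2 + 1) = 1 + (if sgnr e2 * (l2 + 1 - l1) > 0 then 1 else 0)
                             + (if sgnr e3 * (l2 + 1 - l2) > 0 then 1 else 0)"
    using l12 by (intro Id_canon[OF symA symB invQ QA QB]) simp
  then have "sgnr e2 * (l2 + 1 - l1) > 0" "sgnr e3 * (l2 + 1 - l2) > 0"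
    using Id3 by (auto split: if_splits)
  then show ?thesis using l12 sgnr_pos[of e2 "l2 + 1 - l1"] sgnr_pos[of e3 "l2 + 1 - l2"] by auto
qed

lemma seq_case:
  fixes A B :: "real^4^4"
  assumes symA: "transpose A = A" and symB: "transpose B = B"
    and ab: "a * d - b * c \<noteq> 0"
    and idx: "index_sequence_21_1 (a *\<^sub>R A + b *\<^sub>R B) (c *\<^sub>R A + d *\<^sub>R B) (IdxSeq [1, 2, 3] [[Wr e0, Wr e0, Bar], [Bar]])"
  shows "\<exists>C1 C2. QSIC_two_conics A B C1 C2 \<and> tangent_at_one_real_point C1 C2 \<and>
     (e0 = Neg \<longrightarrow> real_conic C1 \<and> real_conic C2) \<and>
     (e0 = Pos \<longrightarrow> imaginary_conic C1 \<and> imaginary_conic C2)"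
proof -
  let ?A = "a *\<^sub>R A + b *\<^sub>R B" and ?B = "c *\<^sub>R A + d *\<^sub>R B"
  obtain Q l1 l2 e e2 e3 s0 s1 s2 where
    invQ: "invertible Q" and l12: "l1 \<noteq> l2" and
    QA: "transpose Q ** ?A ** Q = canA_21_1 (sgnr e) (sgnr e2) (sgnr e3)" and
    QB: "transpose Q ** ?B ** Q = canB_21_1 (sgnr e) (sgnr e2) (sgnr e3) l1 l2" and
    I2: "\<forall>l. max l1 l2 < l \<longrightarrow> Id_pencil ?A ?B l = s2" and
    S: "IdxSeq [1, 2, 3] [[Wr e0, Wr e0, Bar], [Bar]] = IdxSeq [s0, s1, s2]
              (if l1 < l2 then [[Wr e, Wr e, Bar], [Bar]] else [[Bar], [Wr e, Wr e, Bar]])"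
    using idx unfolding index_sequence_21_1_def by blast
  have lt: "l1 < l2" using S by (auto split: if_splits)
  have ee: "e = e0" and s2: "s2 = 3" using S lt by auto
  have symA': "transpose ?A = ?A" and symB': "transpose ?B = ?B" using sym_comb[OF symA symB] by auto
  have "Id_pencil ?A ?B (l2 + 1) = 3" using I2 lt s2 by auto
  then have pos: "e2 = Pos \<and> e3 = Pos" using Id_from_seq[OF symA' symB' invQ QA QB lt] by blast
  have QA': "transpose Q ** ?A ** Q = canA_21_1 (sgnr e) 1 1" using QA pos by (simp add: sgnr_def)
  have QB': "transpose Q ** ?B ** Q = canB_21_1 (sgnr e) 1 1 l1 l2" using QB pos by (simp add: sgnr_def)
  have ss: "sgnr e = 1 \<or> sgnr e = -1" by (cases e) (auto simp: sgnr_def)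
  obtain C1 C2 where C: "QSIC_two_conics ?A ?B C1 C2" "tangent_at_one_real_point C1 C2"
    "sgnr e = -1 \<longrightarrow> real_conic C1 \<and> real_conic C2"
    "sgnr e = 1 \<longrightarrow> imaginary_conic C1 \<and> imaginary_conic C2"
    using geo[OF symA' invQ QA' QB' ss lt] by blast
  have "QSIC_two_conics A B C1 C2" using C(1) QSIC_pencil[OF ab]
    unfolding QSIC_two_conics_def by simp
  moreover have "e0 = Neg \<longrightarrow> real_conic C1 \<and> real_conic C2" using C(3) ee by (simp add: sgnr_def)
  moreover have "e0 = Pos \<longrightarrow> imaginary_conic C1 \<and> imaginary_conic C2" using C(4) ee by (simp add: sgnr_def)
  ultimately show ?thesis using C(2) by blast
qed


lemma existence:
  fixes A B P :: "real^4^4"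
  assumes symA: "transpose A = A" and symB: "transpose B = B" and invA: "invertible A"
    and invP: "invertible P" and BP: "B ** P = A ** P ** jordan_21_1 l1 l2" and l12: "l1 \<noteq> l2"
  shows "index_sequence_equiv A B seq_minus \<or> index_sequence_equiv A B seq_plus"
proof -
  obtain Q0 e0 e20 e30 where c0: "sgnr e20 * (transpose P ** A ** P) $ 3 $ 3 > 0"
      "sgnr e30 * (transpose P ** A ** P) $ 4 $ 4 > 0"
    using canon_exists[OF symA symB invA invP BP l12] by blast
  define g3 where "g3 = (transpose P ** A ** P) $ 3 $ 3"
  define g4 where "g4 = (transpose P ** A ** P) $ 4 $ 4"
  have g3: "g3 \<noteq> 0" and g4: "g4 \<noteq> 0" using c0 by (auto simp: g3_def g4_def)
  define p :: real where "p = (if g3 > 0 then 1 else -1)"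
  define q :: real where "q = (if g4 > 0 then 1 else -1)"
  have pg: "p * g3 > 0" using g3 by (auto simp: p_def)
  have qg: "q * g4 > 0" using g4 by (auto simp: q_def)
  have p0: "p \<noteq> 0" and q0: "q \<noteq> 0" by (auto simp: p_def q_def)
  have dl: "l2 - l1 \<noteq> 0" using l12 by simp
  define b where "b = (q - p) / (l2 - l1)"
  define a where "a = p - b * l1"
  define d where "d = (q + p) / (l2 - l1)"
  define c where "c = - p - d * l1"
  have f1: "a + b * l1 = p" by (simp add: a_def)
  have f2: "a + b * l2 = q"
  proof -
    have "a + b * l2 = p + b * (l2 - l1)" by (simp add: a_def algebra_simps)
    also have "b * (l2 - l1) = q - p" using dl by (simp add: b_def)
    finally show ?thesis by simp
  qed
  have f3: "c + d * l1 = - p" by (simp add: c_def)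
  have f4: "c + d * l2 = q"
  proof -
    have "c + d * l2 = - p + d * (l2 - l1)" by (simp add: c_def algebra_simps)
    also have "d * (l2 - l1) = q + p" using dl by (simp add: d_def)
    finally show ?thesis by simp
  qed
  have hd: "a * d - b * c \<noteq> 0"
  proof
    assume h: "a * d - b * c = 0"
    have "(a * d - b * c) * (l2 - l1) = (a + b * l1) * (c + d * l2) - (a + b * l2) * (c + d * l1)"
      by (simp add: algebra_simps)
    then have "0 = p * q + q * p" using h f1 f2 f3 f4 by simp
    then show False using p0 q0 by (auto simp: p_def q_def split: if_splits)
  qed
  let ?A = "a *\<^sub>R A + b *\<^sub>R B" and ?B = "c *\<^sub>R A + d *\<^sub>R B"
  obtain P' where P': "invertible P'" "?B ** P' = ?A ** P' **
        jordan_21_1 ((c + d * l1) / (a + b * l1)) ((c + d * l2) / (a + b * l2))"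
     "(transpose P' ** ?A ** P') $ 3 $ 3 = (a + b * l1) * (transpose P ** A ** P) $ 3 $ 3"
     "(transpose P' ** ?A ** P') $ 4 $ 4 = (a + b * l2) * (transpose P ** A ** P) $ 4 $ 4"
    using pencil_transform[OF BP invP _ _ hd] f1 f2 p0 q0 by auto
  have m1: "(c + d * l1) / (a + b * l1) = -1" using f1 f3 p0 by simp
  have m2: "(c + d * l2) / (a + b * l2) = 1" using f2 f4 q0 by simp
  have BP': "?B ** P' = ?A ** P' ** jordan_21_1 (-1) 1" using P'(2) unfolding m1 m2 .
  have G3: "(transpose P' ** ?A ** P') $ 3 $ 3 > 0" using P'(3) f1 pg by (simp add: g3_def)
  have G4: "(transpose P' ** ?A ** P') $ 4 $ 4 > 0" using P'(4) f2 qg by (simp add: g4_def)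
  have symA': "transpose ?A = ?A" and symB': "transpose ?B = ?B" using sym_comb[OF symA symB] by auto
  have invA': "invertible ?A"
  proof -
    have R: "a *\<^sub>R mat 1 + b *\<^sub>R jordan_21_1 l1 l2 = rpat p b 0 p q"
      unfolding mat4_eq forall_4 using f1 f2
      by (simp add: rpat_def jordan_21_1_def mat_def algebra_simps)
    have invR: "invertible (rpat p b 0 p q)" using p0 q0 by (intro invertible_rpat)
    have AP: "?A ** P = A ** P ** rpat p b 0 p q" using pencil_lin[OF BP] R by simp
    define Pi where "Pi = matrix_inv P"
    have PPi: "P ** Pi = mat 1" using matrix_inv_props[OF invP] by (simp add: Pi_def)
    have invPi: "invertible Pi" using matrix_inv_props[OF invP] unfolding Pi_def invertible_def by blast
    have "?A = ?A ** P ** Pi" using PPi by (metis matrix_mul_assoc matrix_mul_rid)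
    also have "\<dots> = A ** P ** rpat p b 0 p q ** Pi" using AP by simp
    finally have eqA: "?A = A ** P ** rpat p b 0 p q ** Pi" .
    show ?thesis unfolding eqA using invA invP invR invPi by (intro invertible_mult)
  qed
  have detA': "det ?A \<noteq> 0" using invA' by (simp add: invertible_det_nz)
  obtain Q e e2 e3 where Q: "invertible Q"
      "transpose Q ** ?A ** Q = canA_21_1 (sgnr e) (sgnr e2) (sgnr e3)"
      "transpose Q ** ?B ** Q = canB_21_1 (sgnr e) (sgnr e2) (sgnr e3) (-1) 1"
      "sgnr e2 * (transpose P' ** ?A ** P') $ 3 $ 3 > 0"
      "sgnr e3 * (transpose P' ** ?A ** P') $ 4 $ 4 > 0"
    using canon_exists[OF symA' symB' invA' P'(1) BP'] by auto
  have e2: "e2 = Pos" using Q(4) G3 by (rule sgnr_pos)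
  have e3: "e3 = Pos" using Q(5) G4 by (rule sgnr_pos)
  have Idf: "Id_pencil ?A ?B x = 1 + (if x + 1 > 0 then 1 else 0) + (if x - 1 > 0 then 1 else 0)"
    if "x \<noteq> -1" for x
    using Id_canon[OF symA' symB' Q(1) Q(2) Q(3) that] e2 e3 by (simp add: sgnr_def)
  have i1: "\<forall>l. l < min (-1::real) 1 \<longrightarrow> Id_pencil ?A ?B l = 1"
    using Idf by auto
  have i2: "\<forall>l. min (-1::real) 1 < l \<and> l < max (-1) 1 \<longrightarrow> Id_pencil ?A ?B l = 2"
    using Idf by auto
  have i3: "\<forall>l. max (-1::real) 1 < l \<longrightarrow> Id_pencil ?A ?B l = 3"
    using Idf by auto
  have seqeq: "IdxSeq [1, 2, 3] [[Wr e, Wr e, Bar], [Bar]] = IdxSeq [1, 2, 3]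
       (if (-1::real) < 1 then [[Wr e, Wr e, Bar], [Bar]] else [[Bar], [Wr e, Wr e, Bar]])" by simp
  have big: "invertible Q \<and> (-1::real) \<noteq> 1 \<and>
        transpose Q ** ?A ** Q = canA_21_1 (sgnr e) (sgnr e2) (sgnr e3) \<and>
        transpose Q ** ?B ** Q = canB_21_1 (sgnr e) (sgnr e2) (sgnr e3) (-1) 1 \<and>
        (\<forall>l. l < min (-1::real) 1 \<longrightarrow> Id_pencil ?A ?B l = 1) \<and>
        (\<forall>l. min (-1::real) 1 < l \<and> l < max (-1) 1 \<longrightarrow> Id_pencil ?A ?B l = 2) \<and>
        (\<forall>l. max (-1::real) 1 < l \<longrightarrow> Id_pencil ?A ?B l = 3) \<and>
        IdxSeq [1, 2, 3] [[Wr e, Wr e, Bar], [Bar]] = IdxSeq [1, 2, 3]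
       (if (-1::real) < 1 then [[Wr e, Wr e, Bar], [Bar]] else [[Bar], [Wr e, Wr e, Bar]])"
    using Q(1) Q(2) Q(3) i1 i2 i3 seqeq by simp
  have idx: "index_sequence_21_1 ?A ?B (IdxSeq [1, 2, 3] [[Wr e, Wr e, Bar], [Bar]])"
    unfolding index_sequence_21_1_def by (intro exI) (rule big)
  show ?thesis
  proof (cases e)
    case Pos
    then have "index_sequence_equiv A B seq_plus"
      unfolding index_sequence_equiv_def seq_plus_def using hd detA' idx by blast
    then show ?thesis by simp
  next
    case Neg
    then have "index_sequence_equiv A B seq_minus"
      unfolding index_sequence_equiv_def seq_minus_def using hd detA' idx by blast
    then show ?thesis by simp
  qed
qed

theorem theorem16:
  fixes A B :: "real^4^4" and l1 l2 :: real
  assumes symA: "symmetric4 A" and symB: "symmetric4 B"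
    and nonsingA: "det A \<noteq> 0"
    and nonzero: "pencil_poly A B \<noteq> 0"
    and roots: "l1 \<noteq> l2" "order l1 (pencil_poly A B) = 3" "order l2 (pencil_poly A B) = 1"
    and segre: "segre_21_1 A B l1 l2"
  shows "(index_sequence_equiv A B seq_minus \<or> index_sequence_equiv A B seq_plus) \<and>
         (index_sequence_equiv A B seq_minus \<longrightarrow>
            (\<exists>C1 C2. QSIC_two_conics A B C1 C2 \<and> real_conic C1 \<and> real_conic C2 \<and>
                     tangent_at_one_real_point C1 C2)) \<and>
         (index_sequence_equiv A B seq_plus \<longrightarrow>
            (\<exists>C1 C2. QSIC_two_conics A B C1 C2 \<and> imaginary_conic C1 \<and> imaginary_conic C2 \<and>
                     tangent_at_one_real_point C1 C2))"
proof -
  have tA: "transpose A = A" and tB: "transpose B = B" using symA symB by (auto simp: symmetric4_def)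
  have invA: "invertible A" using nonsingA by (simp add: invertible_det_nz)
  obtain P where invP: "invertible P" and PJ: "matrix_inv P ** (matrix_inv A ** B) ** P = jordan_21_1 l1 l2"
    using segre unfolding segre_21_1_def by blast
  have BP: "B ** P = A ** P ** jordan_21_1 l1 l2"
  proof -
    have PP: "P ** matrix_inv P = mat 1" using matrix_inv_props[OF invP] by simp
    have AA: "A ** matrix_inv A = mat 1" using matrix_inv_props[OF invA] by simp
    have "A ** P ** jordan_21_1 l1 l2 = A ** (P ** matrix_inv P) ** (matrix_inv A ** B) ** P"
      unfolding PJ[symmetric] by (simp add: matrix_mul_assoc)
    also have "\<dots> = (A ** matrix_inv A) ** B ** P" using PP by (simp add: matrix_mul_assoc)
    also have "\<dots> = B ** P" using AA by simp
    finally show ?thesis by simp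
  qed
  have part1: "index_sequence_equiv A B seq_minus \<or> index_sequence_equiv A B seq_plus"
    by (rule existence[OF tA tB invA invP BP roots(1)])
  have part2: "\<exists>C1 C2. QSIC_two_conics A B C1 C2 \<and> real_conic C1 \<and> real_conic C2 \<and>
                     tangent_at_one_real_point C1 C2" if H: "index_sequence_equiv A B seq_minus"
  proof -
    obtain a b c d where "a * d - b * c \<noteq> 0"
      "index_sequence_21_1 (a *\<^sub>R A + b *\<^sub>R B) (c *\<^sub>R A + d *\<^sub>R B) (IdxSeq [1, 2, 3] [[Wr Neg, Wr Neg, Bar], [Bar]])"
      using H unfolding index_sequence_equiv_def seq_minus_def by blast
    from seq_case[OF tA tB this] show ?thesis by blast
  qed
  have part3: "\<exists>C1 C2. QSIC_two_conics A B C1 C2 \<and> imaginary_conic C1 \<and> imaginary_conic C2 \<and>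
                     tangent_at_one_real_point C1 C2" if H: "index_sequence_equiv A B seq_plus"
  proof -
    obtain a b c d where "a * d - b * c \<noteq> 0"
      "index_sequence_21_1 (a *\<^sub>R A + b *\<^sub>R B) (c *\<^sub>R A + d *\<^sub>R B) (IdxSeq [1, 2, 3] [[Wr Pos, Wr Pos, Bar], [Bar]])"
      using H unfolding index_sequence_equiv_def seq_plus_def by blast
    from seq_case[OF tA tB this] show ?thesis by blast
  qed
  show ?thesis using part1 part2 part3 by blast
qed

end
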